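(* Let $\mathbf t:\mathcal D\to\mathcal T$ be a refinement system and $c:A\to B$ in $\mathcal T$. For presheaves $\psi$ on $B^{-}$, $\rho$ on $B^{+}$, and $\sigma$ on $A^{-}$: (a) $(c^{+})^*({}^{\perp_B}\psi)\cong{}^{\perp_A}\big((c^{-})_!\psi\big)$ as presheaves on $A^{+}$; (b) there is a natural transformation $(c^{-})_!(\rho^{\perp_B})\Rightarrow\big((c^{+})^*\rho\big)^{\perp_A}$ of presheaves on $A^{-}$; (c) there is a natural transformation $(c^{+})_!({}^{\perp_A}\sigma)\Rightarrow{}^{\perp_B}\big((c^{-})^*\sigma\big)$ of presheaves on $B^{+}$.
   Context: A refinement system is a functor $\mathbf{t}:\mathcal{D}\to\mathcal{T}$; composition is diagrammatic. Write $P\sqsubset A$ if $\mathbf t(P)=A$; a derivation of $P\Rightarrow_cQ$ is a morphism $\alpha:P\to Q$ with $\mathbf t(\alpha)=c$. For $B\in\mathcal T$: $B^{+}$ has objects $(P,c)$, $P\sqsubset X$, $c:X\to B$, morphisms $(P_1,c_1)\to(P_2,c_2)$ the derivations of $P_1\Rightarrow_eP_2$ with $c_1=e;c_2$; $B^{-}$ is the opposite of the category with objects $(d,R)$, $d:B\to Y$, $R\sqsubset Y$, morphisms $(d_1,R_1)\to(d_2,R_2)$ the derivations of $R_1\Rightarrow_eR_2$ with $d_1;e=d_2$. For $c:A\to B$: $c^{+}:A^{+}\to B^{+}$, $(P,e)\mapsto(P,e;c)$, and $c^{-}:B^{-}\to A^{-}$, $(d,R)\mapsto(c;d,R)$, identity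 on derivations. $\mathrm{Jdg}(\mathbf t)$ has objects $(P,c,R)$ and morphisms $(P_1,c_1,R_1)\to(P_2,c_2,R_2)$ pairs of derivations $\beta$ of $P_1\Rightarrow_eP_2$, $\gamma$ of $R_2\Rightarrow_{e'}R_1$ with $c_1=e;c_2;e'$; $\mathrm{Der}:\mathrm{Jdg}(\mathbf t)^{op}\to\mathbf{Set}$ sends $(P,c,R)$ to the set of derivations of $P\Rightarrow_cR$ and $(\beta,\gamma)$ to $\alpha\mapsto\beta;\alpha;\gamma$. Bracket $\langle-\mid-\rangle_B:B^{+}\times B^{-}\to\mathrm{Jdg}(\mathbf t)$: $((P,c),(d,R))\mapsto(P,c;d,R)$, $(\beta,\gamma)\mapsto(\beta,\gamma)$. Duals with respect to $B$: for $\phi$ on $B^{+}$, $\phi^{\perp_B}(y)=$ the set of natural transformations $\phi\Rightarrow\mathrm{Der}(\langle-\mid y\rangle_B)$ (a presheaf on $B^{-}$); for $\psi$ on $B^{-}$, ${}^{\perp_B}\psi(x)=$ the set of natural transformations $\psi\Rightarrow\mathrm{Der}(\langle x\mid-\rangle_B)$ (a presheaf on $B^{+}$); similarly for $A$. For a functor $F:\mathcal X\to\mathcal Y$: $F^*\psi=\psi\circ F^{op}$ and $F_!\chi(y)=\int^{x}\mathcal Y(y,Fx)\times\chi(x)$. *)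

theory Defs
  imports Main
begin

section \<open>Small-ish categories as explicit data (composition is diagrammatic)\<close>

record ('o,'m) cat =
  cOb  :: "'o set"
  cHom :: "'o \<Rightarrow> 'o \<Rightarrow> 'm set"
  cCmp :: "'m \<Rightarrow> 'm \<Rightarrow> 'm"
  cId  :: "'o \<Rightarrow> 'm"

definition category :: "('o,'m) cat \<Rightarrow> bool" where
  "category C \<longleftrightarrow>
     (\<forall>x y. cHom C x y \<noteq> {} \<longrightarrow> x \<in> cOb C \<and> y \<in> cOb C) \<and>
     (\<forall>x\<in>cOb C. cId C x \<in> cHom C x x) \<and>
     (\<forall>x y z f g. f \<in> cHom C x y \<longrightarrow> g \<in> cHom C y z \<longrightarrow> cCmp C f g \<in> cHom C x z) \<and>
     (\<forall>x y f. f \<in> cHom C x y \<longrightarrow> cCmp C (cId C x) f = f \<and> cCmp C f (cId C y) = f) \<and>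
     (\<forall>w x y z f g h. f \<in> cHom C w x \<longrightarrow> g \<in> cHom C x y \<longrightarrow> h \<in> cHom C y z \<longrightarrow>
        cCmp C (cCmp C f g) h = cCmp C f (cCmp C g h))"

definition is_functor :: "('o,'m) cat \<Rightarrow> ('o2,'m2) cat \<Rightarrow> ('o \<Rightarrow> 'o2) \<Rightarrow> ('m \<Rightarrow> 'm2) \<Rightarrow> bool" where
  "is_functor C C' Fo Fm \<longleftrightarrow>
     (\<forall>x\<in>cOb C. Fo x \<in> cOb C') \<and>
     (\<forall>x y f. f \<in> cHom C x y \<longrightarrow> Fm f \<in> cHom C' (Fo x) (Fo y)) \<and>
     (\<forall>x\<in>cOb C. Fm (cId C x) = cId C' (Fo x)) \<and>
     (\<forall>x y z f g. f \<in> cHom C x y \<longrightarrow> g \<in> cHom C y z \<longrightarrow>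
        Fm (cCmp C f g) = cCmp C' (Fm f) (Fm g))"

definition opcat :: "('o,'m) cat \<Rightarrow> ('o,'m) cat" where
  "opcat C = \<lparr>cOb = cOb C, cHom = (\<lambda>x y. cHom C y x), cCmp = (\<lambda>f g. cCmp C g f), cId = cId C\<rparr>"

definition refinement_system ::
  "('p,'d) cat \<Rightarrow> ('a,'c) cat \<Rightarrow> ('p \<Rightarrow> 'a) \<Rightarrow> ('d \<Rightarrow> 'c) \<Rightarrow> bool" where
  "refinement_system D T to tm \<longleftrightarrow> category D \<and> category T \<and> is_functor D T to tm"

definition Bplus_ob :: "('p,'d) cat \<Rightarrow> ('a,'c) cat \<Rightarrow> ('p \<Rightarrow> 'a) \<Rightarrow> 'a \<Rightarrow> ('p \<times> 'c) set" where
  "Bplus_ob D T to B = {(P,c). P \<in> cOb D \<and> c \<in> cHom T (to P) B}"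

definition Bplus :: "('p,'d) cat \<Rightarrow> ('a,'c) cat \<Rightarrow> ('p \<Rightarrow> 'a) \<Rightarrow> ('d \<Rightarrow> 'c) \<Rightarrow> 'a \<Rightarrow> ('p \<times> 'c, 'd) cat" where
  "Bplus D T to tm B =
    \<lparr>cOb = Bplus_ob D T to B,
     cHom = (\<lambda>(P1,c1) (P2,c2). {\<alpha> \<in> cHom D P1 P2.
               (P1,c1) \<in> Bplus_ob D T to B \<and> (P2,c2) \<in> Bplus_ob D T to B \<and> c1 = cCmp T (tm \<alpha>) c2}),
     cCmp = cCmp D,
     cId = (\<lambda>(P,c). cId D P)\<rparr>"

definition Bminus_ob :: "('p,'d) cat \<Rightarrow> ('a,'c) cat \<Rightarrow> ('p \<Rightarrow> 'a) \<Rightarrow> 'a \<Rightarrow> ('c \<times> 'p) set" where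
  "Bminus_ob D T to B = {(d,R). R \<in> cOb D \<and> d \<in> cHom T B (to R)}"

definition Bminus0 :: "('p,'d) cat \<Rightarrow> ('a,'c) cat \<Rightarrow> ('p \<Rightarrow> 'a) \<Rightarrow> ('d \<Rightarrow> 'c) \<Rightarrow> 'a \<Rightarrow> ('c \<times> 'p, 'd) cat" where
  "Bminus0 D T to tm B =
    \<lparr>cOb = Bminus_ob D T to B,
     cHom = (\<lambda>(d1,R1) (d2,R2). {\<alpha> \<in> cHom D R1 R2.
               (d1,R1) \<in> Bminus_ob D T to B \<and> (d2,R2) \<in> Bminus_ob D T to B \<and> cCmp T d1 (tm \<alpha>) = d2}),
     cCmp = cCmp D,
     cId = (\<lambda>(d,R). cId D R)\<rparr>"

definition Bminus :: "('p,'d) cat \<Rightarrow> ('a,'c) cat \<Rightarrow> ('p \<Rightarrow> 'a) \<Rightarrow> ('d \<Rightarrow> 'c) \<Rightarrow> 'a \<Rightarrow> ('c \<times> 'p, 'd) cat" where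
  "Bminus D T to tm B = opcat (Bminus0 D T to tm B)"

text \<open>c+ and c- (identity on derivations).\<close>
definition cplus :: "('a,'c) cat \<Rightarrow> 'c \<Rightarrow> ('p \<times> 'c) \<Rightarrow> ('p \<times> 'c)" where
  "cplus T c = (\<lambda>(P,e). (P, cCmp T e c))"

definition cminus :: "('a,'c) cat \<Rightarrow> 'c \<Rightarrow> ('c \<times> 'p) \<Rightarrow> ('c \<times> 'p)" where
  "cminus T c = (\<lambda>(d,R). (cCmp T c d, R))"

definition Jdg_ob :: "('p,'d) cat \<Rightarrow> ('a,'c) cat \<Rightarrow> ('p \<Rightarrow> 'a) \<Rightarrow> ('p \<times> 'c \<times> 'p) set" where
  "Jdg_ob D T to = {(P,c,R). P \<in> cOb D \<and> R \<in> cOb D \<and> c \<in> cHom T (to P) (to R)}"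

definition Jdg :: "('p,'d) cat \<Rightarrow> ('a,'c) cat \<Rightarrow> ('p \<Rightarrow> 'a) \<Rightarrow> ('d \<Rightarrow> 'c) \<Rightarrow> ('p \<times> 'c \<times> 'p, 'd \<times> 'd) cat" where
  "Jdg D T to tm =
    \<lparr>cOb = Jdg_ob D T to,
     cHom = (\<lambda>(P1,c1,R1) (P2,c2,R2). {(\<beta>,\<gamma>). \<beta> \<in> cHom D P1 P2 \<and> \<gamma> \<in> cHom D R2 R1 \<and>
               (P1,c1,R1) \<in> Jdg_ob D T to \<and> (P2,c2,R2) \<in> Jdg_ob D T to \<and>
               c1 = cCmp T (cCmp T (tm \<beta>) c2) (tm \<gamma>)}),
     cCmp = (\<lambda>(\<beta>,\<gamma>) (\<beta>',\<gamma>'). (cCmp D \<beta> \<beta>', cCmp D \<gamma>' \<gamma>)),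
     cId = (\<lambda>(P,c,R). (cId D P, cId D R))\<rparr>"

text \<open>Presheaves (Set-valued contravariant functors), given by object part and action:
  for f in Hom x y, snd F x y f maps fst F y to fst F x.\<close>
type_synonym ('o,'m,'v) psh = "('o \<Rightarrow> 'v set) \<times> ('o \<Rightarrow> 'o \<Rightarrow> 'm \<Rightarrow> 'v \<Rightarrow> 'v)"

definition presheaf :: "('o,'m) cat \<Rightarrow> ('o,'m,'v) psh \<Rightarrow> bool" where
  "presheaf C F \<longleftrightarrow>
     (\<forall>x y f a. f \<in> cHom C x y \<longrightarrow> a \<in> fst F y \<longrightarrow> snd F x y f a \<in> fst F x) \<and>
     (\<forall>x\<in>cOb C. \<forall>a\<in>fst F x. snd F x x (cId C x) a = a) \<and>
     (\<forall>x y z f g a. f \<in> cHom C x y \<longrightarrow> g \<in> cHom C y z \<longrightarrow> a \<in> fst F z \<longrightarrow>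
        snd F x z (cCmp C f g) a = snd F x y f (snd F y z g a))"

definition derivs :: "('p,'d) cat \<Rightarrow> ('d \<Rightarrow> 'c) \<Rightarrow> 'p \<Rightarrow> 'p \<Rightarrow> 'c \<Rightarrow> 'd set" where
  "derivs D tm P Q c = {\<alpha> \<in> cHom D P Q. tm \<alpha> = c}"

definition Der :: "('p,'d) cat \<Rightarrow> ('d \<Rightarrow> 'c) \<Rightarrow> ('p \<times> 'c \<times> 'p, 'd \<times> 'd, 'd) psh" where
  "Der D tm = ((\<lambda>(P,c,R). derivs D tm P R c),
               (\<lambda>x y (\<beta>,\<gamma>) \<alpha>. cCmp D (cCmp D \<beta> \<alpha>) \<gamma>))"

definition nat_trans :: "('o,'m) cat \<Rightarrow> ('o,'m,'v) psh \<Rightarrow> ('o,'m,'w) psh \<Rightarrow> ('o \<Rightarrow> 'v \<Rightarrow> 'w) \<Rightarrow> bool" where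
  "nat_trans C F G \<eta> \<longleftrightarrow>
     (\<forall>x. x \<notin> cOb C \<longrightarrow> \<eta> x = undefined) \<and>
     (\<forall>x\<in>cOb C. \<forall>a. (a \<in> fst F x \<longrightarrow> \<eta> x a \<in> fst G x) \<and> (a \<notin> fst F x \<longrightarrow> \<eta> x a = undefined)) \<and>
     (\<forall>x y f a. f \<in> cHom C x y \<longrightarrow> a \<in> fst F y \<longrightarrow> \<eta> x (snd F x y f a) = snd G x y f (\<eta> y a))"

definition psh_iso :: "('o,'m) cat \<Rightarrow> ('o,'m,'v) psh \<Rightarrow> ('o,'m,'w) psh \<Rightarrow> bool" where
  "psh_iso C F G \<longleftrightarrow> (\<exists>\<eta>. nat_trans C F G \<eta> \<and> (\<forall>x\<in>cOb C. bij_betw (\<eta> x) (fst F x) (fst G x)))"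

definition pull :: "('o \<Rightarrow> 'o2) \<Rightarrow> ('m \<Rightarrow> 'm2) \<Rightarrow> ('o2,'m2,'v) psh \<Rightarrow> ('o,'m,'v) psh" where
  "pull Fo Fm G = ((\<lambda>x. fst G (Fo x)), (\<lambda>x y f. snd G (Fo x) (Fo y) (Fm f)))"

text \<open>Left Kan extension F_! chi (y) = coend over x of Y(y,Fx) x chi(x), as a quotient of triples.\<close>
definition lan_carrier :: "('ox,'mx) cat \<Rightarrow> ('oy,'my) cat \<Rightarrow> ('ox \<Rightarrow> 'oy) \<Rightarrow> ('ox,'mx,'v) psh \<Rightarrow> 'oy \<Rightarrow> ('ox \<times> 'my \<times> 'v) set" where
  "lan_carrier X Y Fo \<chi> y = {(x,f,a). x \<in> cOb X \<and> f \<in> cHom Y y (Fo x) \<and> a \<in> fst \<chi> x}"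

definition lan_rel :: "('ox,'mx) cat \<Rightarrow> ('oy,'my) cat \<Rightarrow> ('ox \<Rightarrow> 'oy) \<Rightarrow> ('mx \<Rightarrow> 'my) \<Rightarrow> ('ox,'mx,'v) psh \<Rightarrow> 'oy \<Rightarrow> (('ox \<times> 'my \<times> 'v) \<times> ('ox \<times> 'my \<times> 'v)) set" where
  "lan_rel X Y Fo Fm \<chi> y = {((x, f, snd \<chi> x x' u a), (x', cCmp Y f (Fm u), a)) | x x' u f a.
       u \<in> cHom X x x' \<and> f \<in> cHom Y y (Fo x) \<and> a \<in> fst \<chi> x'}"

definition lan_eq :: "('ox,'mx) cat \<Rightarrow> ('oy,'my) cat \<Rightarrow> ('ox \<Rightarrow> 'oy) \<Rightarrow> ('mx \<Rightarrow> 'my) \<Rightarrow> ('ox,'mx,'v) psh \<Rightarrow> 'oy \<Rightarrow> (('ox \<times> 'my \<times> 'v) \<times> ('ox \<times> 'my \<times> 'v)) set" where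
  "lan_eq X Y Fo Fm \<chi> y = (lan_rel X Y Fo Fm \<chi> y \<union> (lan_rel X Y Fo Fm \<chi> y)\<inverse>)\<^sup>*"

definition lan :: "('ox,'mx) cat \<Rightarrow> ('oy,'my) cat \<Rightarrow> ('ox \<Rightarrow> 'oy) \<Rightarrow> ('mx \<Rightarrow> 'my) \<Rightarrow> ('ox,'mx,'v) psh \<Rightarrow> ('oy,'my,('ox \<times> 'my \<times> 'v) set) psh" where
  "lan X Y Fo Fm \<chi> =
     ((\<lambda>y. lan_carrier X Y Fo \<chi> y // lan_eq X Y Fo Fm \<chi> y),
      (\<lambda>y1 y2 g S. lan_eq X Y Fo Fm \<chi> y1 `` ((\<lambda>(x,f,a). (x, cCmp Y g f, a)) ` S)))"

definition bra :: "('a,'c) cat \<Rightarrow> ('p \<times> 'c) \<Rightarrow> ('c \<times> 'p) \<Rightarrow> ('p \<times> 'c \<times> 'p)" where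
  "bra T x y = (fst x, cCmp T (snd x) (fst y), snd y)"

text \<open>Der(<- | y>_B), a presheaf on B+, and Der(<x | ->_B), a presheaf on B-.\<close>
definition DerL :: "('p,'d) cat \<Rightarrow> ('a,'c) cat \<Rightarrow> ('d \<Rightarrow> 'c) \<Rightarrow> ('c \<times> 'p) \<Rightarrow> ('p \<times> 'c, 'd, 'd) psh" where
  "DerL D T tm y = pull (\<lambda>x. bra T x y) (\<lambda>\<beta>. (\<beta>, cId D (snd y))) (Der D tm)"

definition DerR :: "('p,'d) cat \<Rightarrow> ('a,'c) cat \<Rightarrow> ('d \<Rightarrow> 'c) \<Rightarrow> ('p \<times> 'c) \<Rightarrow> ('c \<times> 'p, 'd, 'd) psh" where
  "DerR D T tm x = pull (\<lambda>y. bra T x y) (\<lambda>\<gamma>. (cId D (fst x), \<gamma>)) (Der D tm)"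

text \<open>phi^{perp_B}: presheaf on B- for phi a presheaf on B+.\<close>
definition perp :: "('p,'d) cat \<Rightarrow> ('a,'c) cat \<Rightarrow> ('p \<Rightarrow> 'a) \<Rightarrow> ('d \<Rightarrow> 'c) \<Rightarrow> 'a \<Rightarrow>
    ('p \<times> 'c, 'd, 'v) psh \<Rightarrow> ('c \<times> 'p, 'd, ('p \<times> 'c) \<Rightarrow> 'v \<Rightarrow> 'd) psh" where
  "perp D T to tm B \<phi> =
     ((\<lambda>y. {\<eta>. nat_trans (Bplus D T to tm B) \<phi> (DerL D T tm y) \<eta>}),
      (\<lambda>y1 y2 g \<eta>. (\<lambda>x. if x \<in> cOb (Bplus D T to tm B)
          then (\<lambda>a. if a \<in> fst \<phi> x
                     then snd (Der D tm) (bra T x y1) (bra T x y2) (cId D (fst x), g) (\<eta> x a)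
                     else undefined)
          else undefined)))"

text \<open>^{perp_B} psi: presheaf on B+ for psi a presheaf on B-.\<close>
definition lperp :: "('p,'d) cat \<Rightarrow> ('a,'c) cat \<Rightarrow> ('p \<Rightarrow> 'a) \<Rightarrow> ('d \<Rightarrow> 'c) \<Rightarrow> 'a \<Rightarrow>
    ('c \<times> 'p, 'd, 'v) psh \<Rightarrow> ('p \<times> 'c, 'd, ('c \<times> 'p) \<Rightarrow> 'v \<Rightarrow> 'd) psh" where
  "lperp D T to tm B \<psi> =
     ((\<lambda>x. {\<eta>. nat_trans (Bminus D T to tm B) \<psi> (DerR D T tm x) \<eta>}),
      (\<lambda>x1 x2 f \<eta>. (\<lambda>y. if y \<in> cOb (Bminus D T to tm B)
          then (\<lambda>a. if a \<in> fst \<psi> y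
                     then snd (Der D tm) (bra T x1 y) (bra T x2 y) (f, cId D (snd y)) (\<eta> y a)
                     else undefined)
          else undefined)))"

end

theory Submission
  imports Defs
begin



definition lan_ext :: "('ox,'mx) cat \<Rightarrow> ('oy,'my) cat \<Rightarrow> ('ox\<Rightarrow>'oy) \<Rightarrow> ('mx\<Rightarrow>'my) \<Rightarrow> ('ox,'mx,'v) psh
   \<Rightarrow> ('oy \<Rightarrow> ('ox\<times>'my\<times>'v) \<Rightarrow> 'w) \<Rightarrow> 'oy \<Rightarrow> ('ox\<times>'my\<times>'v) set \<Rightarrow> 'w" where
 "lan_ext X Y Fo Fm \<chi> h = (\<lambda>y. if y \<in> cOb Y then (\<lambda>S. if S \<in> fst (lan X Y Fo Fm \<chi>) y then h y (SOME t. t \<in> S) else undefined) else undefined)"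

lemma catD:
  assumes "category C"
  shows cat_ob: "f \<in> cHom C x y \<Longrightarrow> x \<in> cOb C \<and> y \<in> cOb C"
    and cat_id: "x \<in> cOb C \<Longrightarrow> cId C x \<in> cHom C x x"
    and cat_comp: "f \<in> cHom C x y \<Longrightarrow> g \<in> cHom C y z \<Longrightarrow> cCmp C f g \<in> cHom C x z"
    and cat_idl: "f \<in> cHom C x y \<Longrightarrow> cCmp C (cId C x) f = f"
    and cat_idr: "f \<in> cHom C x y \<Longrightarrow> cCmp C f (cId C y) = f"
    and cat_assoc: "f \<in> cHom C w x \<Longrightarrow> g \<in> cHom C x y \<Longrightarrow> h \<in> cHom C y z \<Longrightarrow>
        cCmp C (cCmp C f g) h = cCmp C f (cCmp C g h)"
  using assms unfolding category_def by blast+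

locale lanctx =
  fixes X :: "('ox,'mx) cat" and Y :: "('oy,'my) cat" and Fo :: "'ox \<Rightarrow> 'oy" and Fm :: "'mx \<Rightarrow> 'my"
    and \<chi> :: "('ox,'mx,'v) psh"
  assumes catX: "category X" and catY: "category Y"
    and Fo_ob: "x \<in> cOb X \<Longrightarrow> Fo x \<in> cOb Y"
    and Fm_hom: "u \<in> cHom X x x' \<Longrightarrow> Fm u \<in> cHom Y (Fo x) (Fo x')"
    and act: "u \<in> cHom X x x' \<Longrightarrow> a \<in> fst \<chi> x' \<Longrightarrow> snd \<chi> x x' u a \<in> fst \<chi> x"
begin

abbreviation "car \<equiv> lan_carrier X Y Fo \<chi>"
abbreviation "eqr \<equiv> lan_eq X Y Fo Fm \<chi>"
abbreviation "rel \<equiv> lan_rel X Y Fo Fm \<chi>"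

lemma car_iff: "(x,f,a) \<in> car y \<longleftrightarrow> x \<in> cOb X \<and> f \<in> cHom Y y (Fo x) \<and> a \<in> fst \<chi> x"
  by (simp add: lan_carrier_def)

lemma rel_car: "(t,t') \<in> rel y \<Longrightarrow> t \<in> car y \<and> t' \<in> car y"
  unfolding lan_rel_def lan_carrier_def
  using catX catY act Fm_hom by (auto dest: cat_ob intro: cat_comp[OF catY])

lemma eq_car: "(t,t') \<in> eqr y \<Longrightarrow> t \<in> car y \<Longrightarrow> t' \<in> car y"
  unfolding lan_eq_def
  by (induction rule: rtrancl_induct) (auto dest: rel_car)

lemma eq_resp:
  assumes R: "\<And>x x' u f a. u \<in> cHom X x x' \<Longrightarrow> f \<in> cHom Y y (Fo x) \<Longrightarrow> a \<in> fst \<chi> x' \<Longrightarrow>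
      h (x, f, snd \<chi> x x' u a) = h (x', cCmp Y f (Fm u), a)"
  shows "(t,t') \<in> eqr y \<Longrightarrow> h t = h t'"
  unfolding lan_eq_def
proof (induction rule: rtrancl_induct)
  case base then show ?case by simp
next
  case (step b c)
  have "h b = h c" using step(2) R unfolding lan_rel_def by auto
  then show ?case using step by simp
qed

lemma quot_iff: "S \<in> fst (lan X Y Fo Fm \<chi>) y \<longleftrightarrow> (\<exists>t\<in>car y. S = eqr y `` {t})"
  by (simp add: lan_def quotient_def)

lemma class_in: "t \<in> car y \<Longrightarrow> eqr y `` {t} \<in> fst (lan X Y Fo Fm \<chi>) y"
  using quot_iff by blast

lemma ext_class:
  assumes "y \<in> cOb Y" "t \<in> car y"
    and R: "\<And>x x' u f a. u \<in> cHom X x x' \<Longrightarrow> f \<in> cHom Y y (Fo x) \<Longrightarrow> a \<in> fst \<chi> x' \<Longrightarrow>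
      h y (x, f, snd \<chi> x x' u a) = h y (x', cCmp Y f (Fm u), a)"
  shows "lan_ext X Y Fo Fm \<chi> h y (eqr y `` {t}) = h y t"
proof -
  have "t \<in> eqr y `` {t}" by (simp add: lan_eq_def)
  then have "(SOME s. s \<in> eqr y `` {t}) \<in> eqr y `` {t}" by (rule someI)
  then have "h y t = h y (SOME s. s \<in> eqr y `` {t})"
    using eq_resp[of y "h y", OF R] by blast
  then show ?thesis using assms class_in unfolding lan_ext_def by simp
qed

lemma map_resp:
  assumes g: "g \<in> cHom Y y1 y2"
  shows "(s,s') \<in> eqr y2 \<Longrightarrow> ((\<lambda>(x,f,a). (x, cCmp Y g f, a)) s, (\<lambda>(x,f,a). (x, cCmp Y g f, a)) s') \<in> eqr y1"
  unfolding lan_eq_def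
proof (induction rule: rtrancl_induct)
  case base then show ?case by simp
next
  case (step b c)
  let ?m = "\<lambda>(x,f,a). (x, cCmp Y g f, a)"
  have "(?m b, ?m c) \<in> rel y1 \<union> (rel y1)\<inverse>"
  proof -
    { fix x x' u f a assume u: "u \<in> cHom X x x'" and f: "f \<in> cHom Y y2 (Fo x)" and a: "a \<in> fst \<chi> x'"
      have gf: "cCmp Y g f \<in> cHom Y y1 (Fo x)" using cat_comp[OF catY g f] .
      have as: "cCmp Y g (cCmp Y f (Fm u)) = cCmp Y (cCmp Y g f) (Fm u)"
        using cat_assoc[OF catY g f Fm_hom[OF u]] by simp
      have "((x, cCmp Y g f, snd \<chi> x x' u a), (x', cCmp Y g (cCmp Y f (Fm u)), a)) \<in> rel y1"
        unfolding lan_rel_def as using u gf a by blast }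
    then show ?thesis using step(2) unfolding lan_rel_def by auto
  qed
  then show ?case using step(3) by (meson rtrancl.rtrancl_into_rtrancl)
qed

lemma act_class:
  assumes g: "g \<in> cHom Y y1 y2" and t: "(x,f,a) \<in> car y2"
  shows "snd (lan X Y Fo Fm \<chi>) y1 y2 g (eqr y2 `` {(x,f,a)}) = eqr y1 `` {(x, cCmp Y g f, a)}"
proof -
  let ?m = "\<lambda>(x,f,a). (x, cCmp Y g f, a)"
  have "eqr y1 `` (?m ` (eqr y2 `` {(x,f,a)})) = eqr y1 `` {(x, cCmp Y g f, a)}"
  proof
    show "eqr y1 `` (?m ` (eqr y2 `` {(x,f,a)})) \<subseteq> eqr y1 `` {(x, cCmp Y g f, a)}"
    proof
      fix z assume "z \<in> eqr y1 `` (?m ` (eqr y2 `` {(x,f,a)}))"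
      then obtain s where s: "((x,f,a),s) \<in> eqr y2" and z: "(?m s, z) \<in> eqr y1" by blast
      have "(?m (x,f,a), ?m s) \<in> eqr y1" using map_resp[OF g s] .
      then have "((x, cCmp Y g f, a), z) \<in> eqr y1" using z unfolding lan_eq_def by simp
      then show "z \<in> eqr y1 `` {(x, cCmp Y g f, a)}" by simp
    qed
  next
    have "(x,f,a) \<in> eqr y2 `` {(x,f,a)}" by (simp add: lan_eq_def)
    then have "(x, cCmp Y g f, a) \<in> ?m ` (eqr y2 `` {(x,f,a)})" by force
    then show "eqr y1 `` {(x, cCmp Y g f, a)} \<subseteq> eqr y1 `` (?m ` (eqr y2 `` {(x,f,a)}))" by blast
  qed
  then show ?thesis by (simp add: lan_def)
qed

lemma some_car: assumes "S \<in> fst (lan X Y Fo Fm \<chi>) y"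
  shows "(SOME t. t \<in> S) \<in> car y \<and> (SOME t. t \<in> S) \<in> S"
proof -
  obtain t where t: "t \<in> car y" "S = eqr y `` {t}" using assms quot_iff by blast
  have "t \<in> S" using t by (simp add: lan_eq_def)
  then have s: "(SOME t. t \<in> S) \<in> S" by (rule someI)
  then have "(t, SOME t. t \<in> S) \<in> eqr y" using t by simp
  then show ?thesis using eq_car t s by blast
qed

lemma eq_sym: "(t,t') \<in> eqr y \<Longrightarrow> (t',t) \<in> eqr y"
proof -
  assume "(t,t') \<in> eqr y"
  then have "(t',t) \<in> ((rel y \<union> (rel y)\<inverse>)\<^sup>*)\<inverse>" unfolding lan_eq_def by simp
  then have "(t',t) \<in> ((rel y \<union> (rel y)\<inverse>)\<inverse>)\<^sup>*" by (simp add: rtrancl_converse)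
  moreover have "(rel y \<union> (rel y)\<inverse>)\<inverse> = rel y \<union> (rel y)\<inverse>" by auto
  ultimately show ?thesis unfolding lan_eq_def by simp
qed

lemma rel_class: "(t1,t2) \<in> rel y \<Longrightarrow> eqr y `` {t1} = eqr y `` {t2}"
proof -
  assume r: "(t1,t2) \<in> rel y"
  then have e: "(t1,t2) \<in> eqr y" unfolding lan_eq_def by blast
  then have e': "(t2,t1) \<in> eqr y" by (rule eq_sym)
  show ?thesis
  proof
    show "eqr y `` {t1} \<subseteq> eqr y `` {t2}" using e' unfolding lan_eq_def by (auto intro: rtrancl_trans)
    show "eqr y `` {t2} \<subseteq> eqr y `` {t1}" using e unfolding lan_eq_def by (auto intro: rtrancl_trans)
  qed
qed

lemma ext_nat:
  fixes G :: "('oy,'my,'w) psh"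
  assumes R: "\<And>y x x' u f a. y \<in> cOb Y \<Longrightarrow> u \<in> cHom X x x' \<Longrightarrow> f \<in> cHom Y y (Fo x) \<Longrightarrow> a \<in> fst \<chi> x' \<Longrightarrow>
      h y (x, f, snd \<chi> x x' u a) = h y (x', cCmp Y f (Fm u), a)"
    and V: "\<And>y t. y \<in> cOb Y \<Longrightarrow> t \<in> car y \<Longrightarrow> h y t \<in> fst G y"
    and N: "\<And>y1 y2 g x f a. g \<in> cHom Y y1 y2 \<Longrightarrow> (x,f,a) \<in> car y2 \<Longrightarrow>
       h y1 (x, cCmp Y g f, a) = snd G y1 y2 g (h y2 (x,f,a))"
  shows "nat_trans Y (lan X Y Fo Fm \<chi>) G (lan_ext X Y Fo Fm \<chi> h)"
  unfolding nat_trans_def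
proof (intro conjI allI ballI impI)
  fix y assume "y \<notin> cOb Y" then show "lan_ext X Y Fo Fm \<chi> h y = undefined" by (simp add: lan_ext_def)
next
  fix y S assume y: "y \<in> cOb Y" and S: "S \<in> fst (lan X Y Fo Fm \<chi>) y"
  then obtain t where t: "t \<in> car y" "S = eqr y `` {t}" using quot_iff by blast
  have "lan_ext X Y Fo Fm \<chi> h y (eqr y `` {t}) = h y t" by (rule ext_class[OF y t(1)]) (simp add: R y)
  then show "lan_ext X Y Fo Fm \<chi> h y S \<in> fst G y" using V[OF y t(1)] t by simp
next
  fix y S assume "y \<in> cOb Y" "S \<notin> fst (lan X Y Fo Fm \<chi>) y"
  then show "lan_ext X Y Fo Fm \<chi> h y S = undefined" by (simp add: lan_ext_def)
next
  fix y1 y2 g S assume g: "g \<in> cHom Y y1 y2" and S: "S \<in> fst (lan X Y Fo Fm \<chi>) y2"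
  obtain t where t: "t \<in> car y2" "S = eqr y2 `` {t}" using quot_iff S by blast
  obtain x f a where xfa: "t = (x,f,a)" by (cases t) auto
  have y1: "y1 \<in> cOb Y" and y2: "y2 \<in> cOb Y" using cat_ob[OF catY g] by auto
  have t1: "(x, cCmp Y g f, a) \<in> car y1" using t(1) xfa g catY by (auto simp: car_iff dest: cat_comp)
  show "lan_ext X Y Fo Fm \<chi> h y1 (snd (lan X Y Fo Fm \<chi>) y1 y2 g S) = snd G y1 y2 g (lan_ext X Y Fo Fm \<chi> h y2 S)"
  proof -
    have e1: "lan_ext X Y Fo Fm \<chi> h y1 (eqr y1 `` {(x, cCmp Y g f, a)}) = h y1 (x, cCmp Y g f, a)"
      by (rule ext_class[OF y1 t1]) (simp add: R y1)
    have e2: "lan_ext X Y Fo Fm \<chi> h y2 (eqr y2 `` {t}) = h y2 t"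
      by (rule ext_class[OF y2 t(1)]) (simp add: R y2)
    show ?thesis using act_class[OF g, of x f a] t xfa e1 e2 N[OF g, of x f a] by simp
  qed
qed

end



lemma Bp_ob: "x \<in> cOb (Bplus D T to tm B) \<longleftrightarrow> fst x \<in> cOb D \<and> snd x \<in> cHom T (to (fst x)) B"
  by (cases x) (simp add: Bplus_def Bplus_ob_def)
lemma Bp_hom: "\<alpha> \<in> cHom (Bplus D T to tm B) x y \<longleftrightarrow> \<alpha> \<in> cHom D (fst x) (fst y) \<and>
   x \<in> cOb (Bplus D T to tm B) \<and> y \<in> cOb (Bplus D T to tm B) \<and> snd x = cCmp T (tm \<alpha>) (snd y)"
  by (cases x; cases y) (auto simp add: Bplus_def)
lemma Bp_cmp[simp]: "cCmp (Bplus D T to tm B) = cCmp D" by (simp add: Bplus_def)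
lemma Bp_id[simp]: "cId (Bplus D T to tm B) x = cId D (fst x)" by (cases x) (simp add: Bplus_def)

lemma Bm_ob: "y \<in> cOb (Bminus D T to tm B) \<longleftrightarrow> snd y \<in> cOb D \<and> fst y \<in> cHom T B (to (snd y))"
  by (cases y) (simp add: Bminus_def Bminus0_def opcat_def Bminus_ob_def)
lemma Bm_hom: "\<alpha> \<in> cHom (Bminus D T to tm B) x y \<longleftrightarrow> \<alpha> \<in> cHom D (snd y) (snd x) \<and>
   x \<in> cOb (Bminus D T to tm B) \<and> y \<in> cOb (Bminus D T to tm B) \<and> cCmp T (fst y) (tm \<alpha>) = fst x"
  by (cases x; cases y) (auto simp add: Bminus_def Bminus0_def opcat_def)
lemma Bm_cmp[simp]: "cCmp (Bminus D T to tm B) f g = cCmp D g f" by (simp add: Bminus_def Bminus0_def opcat_def)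
lemma Bm_id[simp]: "cId (Bminus D T to tm B) x = cId D (snd x)" by (cases x) (simp add: Bminus_def Bminus0_def opcat_def)

lemma cplus_simp[simp]: "cplus T c x = (fst x, cCmp T (snd x) c)" by (cases x) (simp add: cplus_def)
lemma cminus_simp[simp]: "cminus T c x = (cCmp T c (fst x), snd x)" by (cases x) (simp add: cminus_def)

lemma derivs_iff[simp]: "\<alpha> \<in> derivs D tm P Q c \<longleftrightarrow> \<alpha> \<in> cHom D P Q \<and> tm \<alpha> = c"
  by (simp add: derivs_def)

lemma DerR_fst[simp]: "fst (DerR D T tm x) y = derivs D tm (fst x) (snd y) (cCmp T (snd x) (fst y))"
  by (simp add: DerR_def pull_def Der_def bra_def)
lemma DerR_snd[simp]: "snd (DerR D T tm x) y1 y2 g \<alpha> = cCmp D (cCmp D (cId D (fst x)) \<alpha>) g"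
  by (simp add: DerR_def pull_def Der_def bra_def)
lemma DerL_fst[simp]: "fst (DerL D T tm y) x = derivs D tm (fst x) (snd y) (cCmp T (snd x) (fst y))"
  by (simp add: DerL_def pull_def Der_def bra_def)
lemma DerL_snd[simp]: "snd (DerL D T tm y) x1 x2 k \<alpha> = cCmp D (cCmp D k \<alpha>) (cId D (snd y))"
  by (simp add: DerL_def pull_def Der_def bra_def)

lemma Der_snd[simp]: "snd (Der D tm) a b pq \<alpha> = cCmp D (cCmp D (fst pq) \<alpha>) (snd pq)"
  by (cases pq) (simp add: Der_def)

lemma lperp_fst: "fst (lperp D T to tm B \<psi>) x = {\<eta>. nat_trans (Bminus D T to tm B) \<psi> (DerR D T tm x) \<eta>}"
  by (simp add: lperp_def)
lemma lperp_snd: "snd (lperp D T to tm B \<psi>) x1 x2 f \<eta> = (\<lambda>y. if y \<in> cOb (Bminus D T to tm B)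
          then (\<lambda>a. if a \<in> fst \<psi> y then cCmp D (cCmp D f (\<eta> y a)) (cId D (snd y)) else undefined)
          else undefined)"
  unfolding lperp_def snd_conv Der_snd by (simp only: fst_conv snd_conv)
lemma perp_fst: "fst (perp D T to tm B \<phi>) y = {\<eta>. nat_trans (Bplus D T to tm B) \<phi> (DerL D T tm y) \<eta>}"
  by (simp add: perp_def)
lemma perp_snd: "snd (perp D T to tm B \<phi>) y1 y2 g \<eta> = (\<lambda>x. if x \<in> cOb (Bplus D T to tm B)
          then (\<lambda>a. if a \<in> fst \<phi> x then cCmp D (cCmp D (cId D (fst x)) (\<eta> x a)) g else undefined)
          else undefined)"
  unfolding perp_def snd_conv Der_snd by (simp only: fst_conv snd_conv)

lemma probe: "fst (cId D (fst x), g) = cId D (fst x)" by simp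
lemma pull_fst[simp]: "fst (pull Fo Fm G) x = fst G (Fo x)" by (simp add: pull_def)
lemma pull_snd[simp]: "snd (pull Fo Fm G) x y f = snd G (Fo x) (Fo y) (Fm f)" by (simp add: pull_def)

lemma nat_transD:
  assumes "nat_trans C F G \<eta>"
  shows nt_out: "x \<notin> cOb C \<Longrightarrow> \<eta> x = undefined"
    and nt_val: "x \<in> cOb C \<Longrightarrow> a \<in> fst F x \<Longrightarrow> \<eta> x a \<in> fst G x"
    and nt_und: "x \<in> cOb C \<Longrightarrow> a \<notin> fst F x \<Longrightarrow> \<eta> x a = undefined"
    and nt_nat: "f \<in> cHom C x y \<Longrightarrow> a \<in> fst F y \<Longrightarrow> \<eta> x (snd F x y f a) = snd G x y f (\<eta> y a)"
  using assms unfolding nat_trans_def by blast+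

lemma presheafD:
  assumes "presheaf C F"
  shows psh_act: "f \<in> cHom C x y \<Longrightarrow> a \<in> fst F y \<Longrightarrow> snd F x y f a \<in> fst F x"
  using assms unfolding presheaf_def by blast

locale RS =
  fixes D :: "('p,'d) cat" and T :: "('a,'c) cat" and to :: "'p \<Rightarrow> 'a" and tm :: "'d \<Rightarrow> 'c"
  assumes rs: "refinement_system D T to tm"
begin

lemma catDD: "category D" and catTT: "category T" and tfun: "is_functor D T to tm"
  using rs by (auto simp: refinement_system_def)

lemmas Dob = cat_ob[OF catDD] and Did = cat_id[OF catDD] and Dcmp = cat_comp[OF catDD]
  and Didl = cat_idl[OF catDD] and Didr = cat_idr[OF catDD] and Dassoc = cat_assoc[OF catDD]
lemmas Tob = cat_ob[OF catTT] and Tid = cat_id[OF catTT] and Tcmp = cat_comp[OF catTT]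
  and Tidl = cat_idl[OF catTT] and Tidr = cat_idr[OF catTT] and Tassoc = cat_assoc[OF catTT]

lemma tm_hom: "f \<in> cHom D P Q \<Longrightarrow> tm f \<in> cHom T (to P) (to Q)"
  using tfun unfolding is_functor_def by blast
lemma tm_cmp: "f \<in> cHom D P Q \<Longrightarrow> g \<in> cHom D Q R \<Longrightarrow> tm (cCmp D f g) = cCmp T (tm f) (tm g)"
  using tfun unfolding is_functor_def by blast
lemma tm_id: "P \<in> cOb D \<Longrightarrow> tm (cId D P) = cId T (to P)"
  using tfun unfolding is_functor_def by blast

lemma cat_Bp: "category (Bplus D T to tm B)"
  unfolding category_def
proof (intro conjI allI impI ballI)
  fix x y assume "cHom (Bplus D T to tm B) x y \<noteq> {}"
  then show "x \<in> cOb (Bplus D T to tm B)" by (auto simp: Bp_hom)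
next
  fix x y assume "cHom (Bplus D T to tm B) x y \<noteq> {}"
  then show "y \<in> cOb (Bplus D T to tm B)" by (auto simp: Bp_hom)
next
  fix x assume x: "x \<in> cOb (Bplus D T to tm B)"
  then show "cId (Bplus D T to tm B) x \<in> cHom (Bplus D T to tm B) x x"
    by (auto simp: Bp_hom Bp_ob Did tm_id Tidl)
next
  fix x y z f g assume f: "f \<in> cHom (Bplus D T to tm B) x y" and g: "g \<in> cHom (Bplus D T to tm B) y z"
  then show "cCmp (Bplus D T to tm B) f g \<in> cHom (Bplus D T to tm B) x z"
    by (auto simp: Bp_hom Bp_ob Dcmp tm_cmp intro!: Tassoc[symmetric] tm_hom)
next
  fix x y f assume f: "f \<in> cHom (Bplus D T to tm B) x y"
  then show "cCmp (Bplus D T to tm B) (cId (Bplus D T to tm B) x) f = f"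
    by (auto simp: Bp_hom Bm_hom Didl Didr)
next
  fix x y f assume f: "f \<in> cHom (Bplus D T to tm B) x y"
  then show "cCmp (Bplus D T to tm B) f (cId (Bplus D T to tm B) y) = f"
    by (auto simp: Bp_hom Didl Didr)
next
  fix w x y z f g h assume "f \<in> cHom (Bplus D T to tm B) w x" "g \<in> cHom (Bplus D T to tm B) x y" "h \<in> cHom (Bplus D T to tm B) y z"
  then show "cCmp (Bplus D T to tm B) (cCmp (Bplus D T to tm B) f g) h = cCmp (Bplus D T to tm B) f (cCmp (Bplus D T to tm B) g h)"
    by (auto simp: Bp_hom Dassoc)
qed

lemma cat_Bm: "category (Bminus D T to tm B)"
  unfolding category_def
proof (intro conjI allI impI ballI)
  fix x y assume "cHom (Bminus D T to tm B) x y \<noteq> {}"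
  then show "x \<in> cOb (Bminus D T to tm B)" by (auto simp: Bm_hom)
next
  fix x y assume "cHom (Bminus D T to tm B) x y \<noteq> {}"
  then show "y \<in> cOb (Bminus D T to tm B)" by (auto simp: Bm_hom)
next
  fix x assume x: "x \<in> cOb (Bminus D T to tm B)"
  then show "cId (Bminus D T to tm B) x \<in> cHom (Bminus D T to tm B) x x"
    by (auto simp: Bm_hom Bm_ob Did tm_id Tidr)
next
  fix x y z f g assume f: "f \<in> cHom (Bminus D T to tm B) x y" and g: "g \<in> cHom (Bminus D T to tm B) y z"
  then show "cCmp (Bminus D T to tm B) f g \<in> cHom (Bminus D T to tm B) x z"
    by (auto simp: Bm_hom Bm_ob Dcmp tm_cmp) (metis Tassoc tm_hom)
next
  fix x y f assume f: "f \<in> cHom (Bminus D T to tm B) x y"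
  then show "cCmp (Bminus D T to tm B) (cId (Bminus D T to tm B) x) f = f"
    by (auto simp: Bp_hom Bm_hom Didl Didr)
next
  fix x y f assume f: "f \<in> cHom (Bminus D T to tm B) x y"
  then show "cCmp (Bminus D T to tm B) f (cId (Bminus D T to tm B) y) = f"
    by (auto simp: Bm_hom Didl Didr)
next
  fix w x y z f g h assume "f \<in> cHom (Bminus D T to tm B) w x" "g \<in> cHom (Bminus D T to tm B) x y" "h \<in> cHom (Bminus D T to tm B) y z"
  then show "cCmp (Bminus D T to tm B) (cCmp (Bminus D T to tm B) f g) h = cCmp (Bminus D T to tm B) f (cCmp (Bminus D T to tm B) g h)"
    by (auto simp: Bm_hom Dassoc)
qed

end



context RS begin

lemma cminus_ob: "c \<in> cHom T A B \<Longrightarrow> y \<in> cOb (Bminus D T to tm B) \<Longrightarrow> cminus T c y \<in> cOb (Bminus D T to tm A)"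
  by (auto simp: Bm_ob intro: Tcmp)

lemma cminus_hom: assumes c: "c \<in> cHom T A B" and u: "u \<in> cHom (Bminus D T to tm B) x x'"
  shows "u \<in> cHom (Bminus D T to tm A) (cminus T c x) (cminus T c x')"
proof -
  from u have u': "u \<in> cHom D (snd x') (snd x)" "x \<in> cOb (Bminus D T to tm B)" "x' \<in> cOb (Bminus D T to tm B)"
    "cCmp T (fst x') (tm u) = fst x" by (auto simp: Bm_hom)
  have "cCmp T (cCmp T c (fst x')) (tm u) = cCmp T c (fst x)"
    using u' c by (subst Tassoc[OF c]) (auto simp: Bm_ob intro: tm_hom)
  then show ?thesis using u' cminus_ob[OF c] by (auto simp: Bm_hom)
qed

lemma cplus_ob: "c \<in> cHom T A B \<Longrightarrow> x \<in> cOb (Bplus D T to tm A) \<Longrightarrow> cplus T c x \<in> cOb (Bplus D T to tm B)"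
  by (auto simp: Bp_ob intro: Tcmp)

lemma cplus_hom: assumes c: "c \<in> cHom T A B" and u: "u \<in> cHom (Bplus D T to tm A) x x'"
  shows "u \<in> cHom (Bplus D T to tm B) (cplus T c x) (cplus T c x')"
proof -
  from u have u': "u \<in> cHom D (fst x) (fst x')" "x \<in> cOb (Bplus D T to tm A)" "x' \<in> cOb (Bplus D T to tm A)"
    "snd x = cCmp T (tm u) (snd x')" by (auto simp: Bp_hom)
  have "cCmp T (snd x) c = cCmp T (tm u) (cCmp T (snd x') c)"
    using u' c Tassoc[OF tm_hom[OF u'(1)] _ c, of "snd x'"] by (auto simp: Bp_ob)
  moreover have "cplus T c x \<in> cOb (Bplus D T to tm B)" "cplus T c x' \<in> cOb (Bplus D T to tm B)"
    using cplus_ob[OF c u'(2)] cplus_ob[OF c u'(3)] by blast+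
  ultimately show ?thesis using u' by (simp add: Bp_hom)
qed

lemma lperp_act:
  assumes clos: "\<And>y1 y2 g a. g \<in> cHom (Bminus D T to tm B) y1 y2 \<Longrightarrow> a \<in> fst \<psi> y2 \<Longrightarrow> snd \<psi> y1 y2 g a \<in> fst \<psi> y1"
    and u: "u \<in> cHom (Bplus D T to tm B) x1 x2" and \<eta>: "\<eta> \<in> fst (lperp D T to tm B \<psi>) x2"
  shows "snd (lperp D T to tm B \<psi>) x1 x2 u \<eta> \<in> fst (lperp D T to tm B \<psi>) x1"
proof -
  let ?BM = "Bminus D T to tm B"
  have nt: "nat_trans ?BM \<psi> (DerR D T tm x2) \<eta>" using \<eta> by (simp add: lperp_fst)
  from u have u': "u \<in> cHom D (fst x1) (fst x2)" "snd x1 = cCmp T (tm u) (snd x2)"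
    "snd x2 \<in> cHom T (to (fst x2)) B" "fst x1 \<in> cOb D" by (auto simp: Bp_hom Bp_ob)
  have val: "\<And>y a. y \<in> cOb ?BM \<Longrightarrow> a \<in> fst \<psi> y \<Longrightarrow> \<eta> y a \<in> cHom D (fst x2) (snd y) \<and> tm (\<eta> y a) = cCmp T (snd x2) (fst y)"
    using nt_val[OF nt] by simp
  show ?thesis unfolding lperp_fst lperp_snd mem_Collect_eq nat_trans_def
  proof (intro conjI allI ballI impI)
    fix y assume "y \<notin> cOb ?BM" then show "(\<lambda>y. if y \<in> cOb ?BM then \<lambda>a. if a \<in> fst \<psi> y then cCmp D (cCmp D u (\<eta> y a)) (cId D (snd y)) else undefined else undefined) y = undefined" by simp
  next
    fix y a assume y: "y \<in> cOb ?BM" and a: "a \<in> fst \<psi> y"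
    have v: "\<eta> y a \<in> cHom D (fst x2) (snd y)" "tm (\<eta> y a) = cCmp T (snd x2) (fst y)" using val[OF y a] by auto
    have ua: "cCmp D u (\<eta> y a) \<in> cHom D (fst x1) (snd y)" using Dcmp[OF u'(1) v(1)] .
    have fy: "fst y \<in> cHom T B (to (snd y))" using y by (simp add: Bm_ob)
    have "tm (cCmp D u (\<eta> y a)) = cCmp T (snd x1) (fst y)"
      using tm_cmp[OF u'(1) v(1)] v(2) u'(2) Tassoc[OF tm_hom[OF u'(1)] u'(3) fy] by simp
    then show "(\<lambda>y. if y \<in> cOb ?BM then \<lambda>a. if a \<in> fst \<psi> y then cCmp D (cCmp D u (\<eta> y a)) (cId D (snd y)) else undefined else undefined) y a \<in> fst (DerR D T tm x1) y"
      using y a ua Didr[OF ua] by simp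
  next
    fix y a assume y: "y \<in> cOb ?BM" and a: "a \<notin> fst \<psi> y"
    then show "(\<lambda>y. if y \<in> cOb ?BM then \<lambda>a. if a \<in> fst \<psi> y then cCmp D (cCmp D u (\<eta> y a)) (cId D (snd y)) else undefined else undefined) y a = undefined" by simp
  next
    fix y1 y2 g a assume g: "g \<in> cHom ?BM y1 y2" and a: "a \<in> fst \<psi> y2"
    have y1: "y1 \<in> cOb ?BM" and y2: "y2 \<in> cOb ?BM" using g by (auto simp: Bm_hom)
    have ga: "snd \<psi> y1 y2 g a \<in> fst \<psi> y1" using clos[OF g a] .
    have gD: "g \<in> cHom D (snd y2) (snd y1)" using g by (simp add: Bm_hom)
    have v: "\<eta> y2 a \<in> cHom D (fst x2) (snd y2)" using val[OF y2 a] by auto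
    have n: "\<eta> y1 (snd \<psi> y1 y2 g a) = cCmp D (cCmp D (cId D (fst x2)) (\<eta> y2 a)) g"
      using nt_nat[OF nt g a] by simp
    have n2: "\<eta> y1 (snd \<psi> y1 y2 g a) = cCmp D (\<eta> y2 a) g" using n Didl[OF v] by simp
    have e1: "\<eta> y1 (snd \<psi> y1 y2 g a) \<in> cHom D (fst x2) (snd y1)" using n2 Dcmp[OF v gD] by simp
    have uv: "cCmp D u (\<eta> y2 a) \<in> cHom D (fst x1) (snd y2)" using Dcmp[OF u'(1) v] .
    have "cCmp D (cCmp D u (\<eta> y1 (snd \<psi> y1 y2 g a))) (cId D (snd y1)) = cCmp D u (cCmp D (\<eta> y2 a) g)"
      using Didr[OF Dcmp[OF u'(1) e1]] n2 by simp
    also have "\<dots> = cCmp D (cCmp D u (\<eta> y2 a)) g" using Dassoc[OF u'(1) v gD] by simp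
    also have "\<dots> = cCmp D (cCmp D (cId D (fst x1)) (cCmp D (cCmp D u (\<eta> y2 a)) (cId D (snd y2)))) g"
      using Didr[OF uv] Didl[OF uv] by simp
    finally show "(\<lambda>y. if y \<in> cOb ?BM then \<lambda>a. if a \<in> fst \<psi> y then cCmp D (cCmp D u (\<eta> y a)) (cId D (snd y)) else undefined else undefined) y1 (snd \<psi> y1 y2 g a) =
       snd (DerR D T tm x1) y1 y2 g ((\<lambda>y. if y \<in> cOb ?BM then \<lambda>a. if a \<in> fst \<psi> y then cCmp D (cCmp D u (\<eta> y a)) (cId D (snd y)) else undefined else undefined) y2 a)"
      using y1 y2 ga a by simp
  qed
qed


lemma perp_act:
  assumes clos: "\<And>x1 x2 k a. k \<in> cHom (Bplus D T to tm B) x1 x2 \<Longrightarrow> a \<in> fst \<rho> x2 \<Longrightarrow> snd \<rho> x1 x2 k a \<in> fst \<rho> x1"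
    and g: "g \<in> cHom (Bminus D T to tm B) y1 y2" and \<eta>: "\<eta> \<in> fst (perp D T to tm B \<rho>) y2"
  shows "snd (perp D T to tm B \<rho>) y1 y2 g \<eta> \<in> fst (perp D T to tm B \<rho>) y1"
proof -
  let ?BP = "Bplus D T to tm B"
  have nt: "nat_trans ?BP \<rho> (DerL D T tm y2) \<eta>" using \<eta> by (simp add: perp_fst)
  from g have g': "g \<in> cHom D (snd y2) (snd y1)" "cCmp T (fst y2) (tm g) = fst y1"
    "fst y2 \<in> cHom T B (to (snd y2))" by (auto simp: Bm_hom Bm_ob)
  have val: "\<And>x a. x \<in> cOb ?BP \<Longrightarrow> a \<in> fst \<rho> x \<Longrightarrow> \<eta> x a \<in> cHom D (fst x) (snd y2) \<and> tm (\<eta> x a) = cCmp T (snd x) (fst y2)"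
    using nt_val[OF nt] by simp
  let ?e = "\<lambda>x. if x \<in> cOb ?BP then \<lambda>a. if a \<in> fst \<rho> x then cCmp D (cCmp D (cId D (fst x)) (\<eta> x a)) g else undefined else undefined"
  show ?thesis unfolding perp_fst perp_snd mem_Collect_eq nat_trans_def
  proof (intro conjI allI ballI impI)
    fix x assume "x \<notin> cOb ?BP" then show "?e x = undefined" by simp
  next
    fix x a assume x: "x \<in> cOb ?BP" and a: "a \<in> fst \<rho> x"
    have v: "\<eta> x a \<in> cHom D (fst x) (snd y2)" "tm (\<eta> x a) = cCmp T (snd x) (fst y2)" using val[OF x a] by auto
    have sx: "snd x \<in> cHom T (to (fst x)) B" using x by (simp add: Bp_ob)
    have vg: "cCmp D (\<eta> x a) g \<in> cHom D (fst x) (snd y1)" using Dcmp[OF v(1) g'(1)] .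
    have "tm (cCmp D (\<eta> x a) g) = cCmp T (snd x) (fst y1)"
      using tm_cmp[OF v(1) g'(1)] v(2) g'(2) Tassoc[OF sx g'(3) tm_hom[OF g'(1)]] by simp
    then show "?e x a \<in> fst (DerL D T tm y1) x"
      using x a vg Didl[OF v(1)] by simp
  next
    fix x a assume "x \<in> cOb ?BP" "a \<notin> fst \<rho> x" then show "?e x a = undefined" by simp
  next
    fix x1 x2 k a assume k: "k \<in> cHom ?BP x1 x2" and a: "a \<in> fst \<rho> x2"
    have x1: "x1 \<in> cOb ?BP" and x2: "x2 \<in> cOb ?BP" using k by (auto simp: Bp_hom)
    have ka: "snd \<rho> x1 x2 k a \<in> fst \<rho> x1" using clos[OF k a] .
    have kD: "k \<in> cHom D (fst x1) (fst x2)" using k by (simp add: Bp_hom)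
    have v: "\<eta> x2 a \<in> cHom D (fst x2) (snd y2)" using val[OF x2 a] by auto
    have n: "\<eta> x1 (snd \<rho> x1 x2 k a) = cCmp D (cCmp D k (\<eta> x2 a)) (cId D (snd y2))"
      using nt_nat[OF nt k a] by simp
    have kv: "cCmp D k (\<eta> x2 a) \<in> cHom D (fst x1) (snd y2)" using Dcmp[OF kD v] .
    have n2: "\<eta> x1 (snd \<rho> x1 x2 k a) = cCmp D k (\<eta> x2 a)" using n Didr[OF kv] by simp
    have vg: "cCmp D (\<eta> x2 a) g \<in> cHom D (fst x2) (snd y1)" using Dcmp[OF v g'(1)] .
    have "cCmp D (cCmp D (cId D (fst x1)) (\<eta> x1 (snd \<rho> x1 x2 k a))) g = cCmp D (cCmp D k (\<eta> x2 a)) g"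
      using n2 Didl[OF kv] by simp
    also have "\<dots> = cCmp D k (cCmp D (\<eta> x2 a) g)" using Dassoc[OF kD v g'(1)] .
    also have "\<dots> = cCmp D (cCmp D k (cCmp D (cCmp D (cId D (fst x2)) (\<eta> x2 a)) g)) (cId D (snd y1))"
      using Didl[OF v] Didr[OF Dcmp[OF kD vg]] by simp
    finally show "?e x1 (snd \<rho> x1 x2 k a) = snd (DerL D T tm y1) x1 x2 k (?e x2 a)"
      using x1 x2 ka a Didl[OF v] by simp
  qed
qed

lemma ifext:
  "(\<And>z a. z \<in> Obs \<Longrightarrow> a \<in> S z \<Longrightarrow> F z a = G z a) \<Longrightarrow>
   (\<lambda>z. if z \<in> Obs then (\<lambda>a. if a \<in> S z then F z a else undefined) else undefined) =
   (\<lambda>z. if z \<in> Obs then (\<lambda>a. if a \<in> S z then G z a else undefined) else undefined)"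
  by (auto intro!: ext)

end



context RS begin
declare if_cong[cong]

lemma part_b:
  assumes c: "c \<in> cHom T A B" and \<rho>: "presheaf (Bplus D T to tm B) \<rho>"
  shows "\<exists>\<eta>. nat_trans (Bminus D T to tm A)
           (lan (Bminus D T to tm B) (Bminus D T to tm A) (cminus T c) id (perp D T to tm B \<rho>))
           (perp D T to tm A (pull (cplus T c) id \<rho>)) \<eta>"
proof -
  let ?BM = "Bminus D T to tm B" and ?AM = "Bminus D T to tm A"
  let ?AP = "Bplus D T to tm A" and ?BP = "Bplus D T to tm B"
  have clos: "\<And>x1 x2 k a. k \<in> cHom ?BP x1 x2 \<Longrightarrow> a \<in> fst \<rho> x2 \<Longrightarrow> snd \<rho> x1 x2 k a \<in> fst \<rho> x1"
    using psh_act[OF \<rho>] by blast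
  interpret L: lanctx ?BM ?AM "cminus T c" id "perp D T to tm B \<rho>"
  proof
    show "category ?BM" "category ?AM" by (rule cat_Bm)+
  next
    fix x assume "x \<in> cOb ?BM" then show "cminus T c x \<in> cOb ?AM" using cminus_ob[OF c] by blast
  next
    fix u x x' assume "u \<in> cHom ?BM x x'" then show "id u \<in> cHom ?AM (cminus T c x) (cminus T c x')"
      using cminus_hom[OF c] by simp
  next
    fix u x x' a assume "u \<in> cHom ?BM x x'" "a \<in> fst (perp D T to tm B \<rho>) x'"
    then show "snd (perp D T to tm B \<rho>) x x' u a \<in> fst (perp D T to tm B \<rho>) x" using perp_act[of B \<rho>, OF clos] by blast
  qed
  define h where "h = (\<lambda>(y::'c\<times>'p) (t::('c\<times>'p)\<times>'d\<times>(('p\<times>'c) \<Rightarrow> _ \<Rightarrow> 'd)).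
     (\<lambda>z. if z \<in> cOb ?AP then (\<lambda>a. if a \<in> fst \<rho> (cplus T c z) then cCmp D ((snd (snd t)) (cplus T c z) a) (fst (snd t)) else undefined) else undefined))"
  have hsimp: "\<And>y x f \<zeta>. h y (x,f,\<zeta>) = (\<lambda>z. if z \<in> cOb ?AP then (\<lambda>a. if a \<in> fst \<rho> (cplus T c z) then cCmp D (\<zeta> (cplus T c z) a) f else undefined) else undefined)"
    by (simp add: h_def del: cplus_simp)
  have zeta: "\<And>x \<zeta> z a. \<zeta> \<in> fst (perp D T to tm B \<rho>) x \<Longrightarrow> z \<in> cOb ?AP \<Longrightarrow> a \<in> fst \<rho> (cplus T c z) \<Longrightarrow>
      \<zeta> (cplus T c z) a \<in> cHom D (fst z) (snd x) \<and> tm (\<zeta> (cplus T c z) a) = cCmp T (cCmp T (snd z) c) (fst x)"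
  proof -
    fix x \<zeta> z a assume \<zeta>: "\<zeta> \<in> fst (perp D T to tm B \<rho>) x" and z: "z \<in> cOb ?AP" and a: "a \<in> fst \<rho> (cplus T c z)"
    have "nat_trans ?BP \<rho> (DerL D T tm x) \<zeta>" using \<zeta> by (simp add: perp_fst)
    from nt_val[OF this cplus_ob[OF c z] a] show "?thesis x \<zeta> z a" by simp
  qed
  have "nat_trans ?AM (lan ?BM ?AM (cminus T c) id (perp D T to tm B \<rho>)) (perp D T to tm A (pull (cplus T c) id \<rho>))
         (lan_ext ?BM ?AM (cminus T c) id (perp D T to tm B \<rho>) h)"
  proof (rule L.ext_nat)
    fix y x x' u f \<zeta> assume y: "y \<in> cOb ?AM" and u: "u \<in> cHom ?BM x x'" and f: "f \<in> cHom ?AM y (cminus T c x)"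
      and \<zeta>: "\<zeta> \<in> fst (perp D T to tm B \<rho>) x'"
    have uD: "u \<in> cHom D (snd x') (snd x)" using u by (simp add: Bm_hom)
    have fD: "f \<in> cHom D (snd x) (snd y)" using f by (simp add: Bm_hom)
    show "h y (x, f, snd (perp D T to tm B \<rho>) x x' u \<zeta>) = h y (x', cCmp ?AM f (id u), \<zeta>)"
      unfolding hsimp
    proof (rule ifext)
      fix z a assume z: "z \<in> cOb ?AP" and a: "a \<in> fst \<rho> (cplus T c z)"
      have al: "\<zeta> (cplus T c z) a \<in> cHom D (fst z) (snd x')" using zeta[OF \<zeta> z a] by blast
      have "snd (perp D T to tm B \<rho>) x x' u \<zeta> (cplus T c z) a = cCmp D (cCmp D (cId D (fst z)) (\<zeta> (cplus T c z) a)) u"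
        using cplus_ob[OF c z] a unfolding perp_snd by (simp del: cplus_simp) simp
      then show "cCmp D (snd (perp D T to tm B \<rho>) x x' u \<zeta> (cplus T c z) a) f = cCmp D (\<zeta> (cplus T c z) a) (cCmp ?AM f (id u))"
        using Didl[OF al] Dassoc[OF al uD fD] by simp
    qed
  next
    fix y t assume y: "y \<in> cOb ?AM" and t: "t \<in> L.car y"
    obtain x f \<zeta> where t': "t = (x,f,\<zeta>)" by (cases t) auto
    have x: "x \<in> cOb ?BM" and f: "f \<in> cHom ?AM y (cminus T c x)" and \<zeta>: "\<zeta> \<in> fst (perp D T to tm B \<rho>) x"
      using t t' by (auto simp: L.car_iff simp del: cminus_simp)
    have fD: "f \<in> cHom D (snd x) (snd y)" and ff: "cCmp T (cCmp T c (fst x)) (tm f) = fst y" using f by (auto simp: Bm_hom)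
    have fx: "fst x \<in> cHom T B (to (snd x))" using x by (simp add: Bm_ob)
    have nt: "nat_trans ?BP \<rho> (DerL D T tm x) \<zeta>" using \<zeta> by (simp add: perp_fst)
    show "h y t \<in> fst (perp D T to tm A (pull (cplus T c) id \<rho>)) y"
      unfolding t' hsimp perp_fst mem_Collect_eq nat_trans_def
    proof (intro conjI allI ballI impI)
      fix z assume "z \<notin> cOb ?AP" then show "(\<lambda>z. if z \<in> cOb ?AP then (\<lambda>a. if a \<in> fst \<rho> (cplus T c z) then cCmp D (\<zeta> (cplus T c z) a) f else undefined) else undefined) z = undefined" by simp
    next
      fix z a assume z: "z \<in> cOb ?AP" and a: "a \<in> fst (pull (cplus T c) id \<rho>) z"
      then have a': "a \<in> fst \<rho> (cplus T c z)" by (simp del: cplus_simp)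
      have al: "\<zeta> (cplus T c z) a \<in> cHom D (fst z) (snd x)" "tm (\<zeta> (cplus T c z) a) = cCmp T (cCmp T (snd z) c) (fst x)"
        using zeta[OF \<zeta> z a'] by blast+
      have sz: "snd z \<in> cHom T (to (fst z)) A" using z by (simp add: Bp_ob)
      have "tm (cCmp D (\<zeta> (cplus T c z) a) f) = cCmp T (cCmp T (cCmp T (snd z) c) (fst x)) (tm f)"
        using tm_cmp[OF al(1) fD] al(2) by simp
      also have "\<dots> = cCmp T (snd z) (cCmp T (cCmp T c (fst x)) (tm f))"
        using Tassoc[OF Tcmp[OF sz c] fx tm_hom[OF fD]] Tassoc[OF sz c fx] Tassoc[OF sz Tcmp[OF c fx] tm_hom[OF fD]]
          Tassoc[OF c fx tm_hom[OF fD]] by simp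
      finally have "tm (cCmp D (\<zeta> (cplus T c z) a) f) = cCmp T (snd z) (fst y)" using ff by simp
      then show "(\<lambda>z. if z \<in> cOb ?AP then (\<lambda>a. if a \<in> fst \<rho> (cplus T c z) then cCmp D (\<zeta> (cplus T c z) a) f else undefined) else undefined) z a \<in> fst (DerL D T tm y) z"
        using z a' Dcmp[OF al(1) fD] by (simp del: cplus_simp)
    next
      fix z a assume "z \<in> cOb ?AP" "a \<notin> fst (pull (cplus T c) id \<rho>) z"
      then show "(\<lambda>z. if z \<in> cOb ?AP then (\<lambda>a. if a \<in> fst \<rho> (cplus T c z) then cCmp D (\<zeta> (cplus T c z) a) f else undefined) else undefined) z a = undefined"
        by (simp del: cplus_simp)
    next
      fix z1 z2 k a assume k: "k \<in> cHom ?AP z1 z2" and a: "a \<in> fst (pull (cplus T c) id \<rho>) z2"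
      have z1: "z1 \<in> cOb ?AP" and z2: "z2 \<in> cOb ?AP" using k by (auto simp: Bp_hom)
      have a': "a \<in> fst \<rho> (cplus T c z2)" using a by (simp del: cplus_simp)
      have kB: "k \<in> cHom ?BP (cplus T c z1) (cplus T c z2)" using cplus_hom[OF c k] .
      have ka: "snd \<rho> (cplus T c z1) (cplus T c z2) k a \<in> fst \<rho> (cplus T c z1)" using clos[OF kB a'] .
      have kD: "k \<in> cHom D (fst z1) (fst z2)" using k by (simp add: Bp_hom)
      have al: "\<zeta> (cplus T c z2) a \<in> cHom D (fst z2) (snd x)" using zeta[OF \<zeta> z2 a'] by blast
      have ka2: "cCmp D k (\<zeta> (cplus T c z2) a) \<in> cHom D (fst z1) (snd x)" using Dcmp[OF kD al] .
      have n: "\<zeta> (cplus T c z1) (snd \<rho> (cplus T c z1) (cplus T c z2) k a) = cCmp D k (\<zeta> (cplus T c z2) a)"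
        using nt_nat[OF nt kB a'] Didr[OF ka2] by (simp del: cplus_simp)
      show "(\<lambda>z. if z \<in> cOb ?AP then (\<lambda>a. if a \<in> fst \<rho> (cplus T c z) then cCmp D (\<zeta> (cplus T c z) a) f else undefined) else undefined) z1 (snd (pull (cplus T c) id \<rho>) z1 z2 k a) =
         snd (DerL D T tm y) z1 z2 k ((\<lambda>z. if z \<in> cOb ?AP then (\<lambda>a. if a \<in> fst \<rho> (cplus T c z) then cCmp D (\<zeta> (cplus T c z) a) f else undefined) else undefined) z2 a)"
        using z1 z2 ka a' n Dassoc[OF kD al fD] Didr[OF Dcmp[OF kD Dcmp[OF al fD]]] by (simp del: cplus_simp)
    qed
  next
    fix y1 y2 g x f \<zeta> assume g: "g \<in> cHom ?AM y1 y2" and t: "(x, f, \<zeta>) \<in> L.car y2"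
    have f: "f \<in> cHom ?AM y2 (cminus T c x)" and \<zeta>: "\<zeta> \<in> fst (perp D T to tm B \<rho>) x"
      using t by (auto simp: L.car_iff simp del: cminus_simp)
    have fD: "f \<in> cHom D (snd x) (snd y2)" using f by (simp add: Bm_hom)
    have gD: "g \<in> cHom D (snd y2) (snd y1)" using g by (simp add: Bm_hom)
    show "h y1 (x, cCmp ?AM g f, \<zeta>) = snd (perp D T to tm A (pull (cplus T c) id \<rho>)) y1 y2 g (h y2 (x, f, \<zeta>))"
      unfolding hsimp perp_snd pull_fst
    proof (rule ifext)
      fix z a assume z: "z \<in> cOb ?AP" and a: "a \<in> fst \<rho> (cplus T c z)"
      have al: "\<zeta> (cplus T c z) a \<in> cHom D (fst z) (snd x)" using zeta[OF \<zeta> z a] by blast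
      show "cCmp D (\<zeta> (cplus T c z) a) (cCmp ?AM g f) =
        cCmp D (cCmp D (cId D (fst z)) ((\<lambda>z. if z \<in> cOb ?AP then \<lambda>a. if a \<in> fst \<rho> (cplus T c z) then cCmp D (\<zeta> (cplus T c z) a) f else undefined else undefined) z a)) g"
        using z a Dassoc[OF al fD gD] Didl[OF Dcmp[OF al fD]] by (simp del: cplus_simp)
    qed
  qed
  then show ?thesis by blast
qed

end



context RS begin

lemma part_c:
  assumes c: "c \<in> cHom T A B" and \<sigma>: "presheaf (Bminus D T to tm A) \<sigma>"
  shows "\<exists>\<eta>. nat_trans (Bplus D T to tm B)
           (lan (Bplus D T to tm A) (Bplus D T to tm B) (cplus T c) id (lperp D T to tm A \<sigma>))
           (lperp D T to tm B (pull (cminus T c) id \<sigma>)) \<eta>"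
proof -
  let ?BM = "Bminus D T to tm B" and ?AM = "Bminus D T to tm A"
  let ?AP = "Bplus D T to tm A" and ?BP = "Bplus D T to tm B"
  have clos: "\<And>y1 y2 g a. g \<in> cHom ?AM y1 y2 \<Longrightarrow> a \<in> fst \<sigma> y2 \<Longrightarrow> snd \<sigma> y1 y2 g a \<in> fst \<sigma> y1"
    using psh_act[OF \<sigma>] by blast
  interpret L: lanctx ?AP ?BP "cplus T c" id "lperp D T to tm A \<sigma>"
  proof
    show "category ?AP" "category ?BP" by (rule cat_Bp)+
  next
    fix x assume "x \<in> cOb ?AP" then show "cplus T c x \<in> cOb ?BP" using cplus_ob[OF c] by blast
  next
    fix u x x' assume "u \<in> cHom ?AP x x'" then show "id u \<in> cHom ?BP (cplus T c x) (cplus T c x')"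
      using cplus_hom[OF c] by simp
  next
    fix u x x' a assume "u \<in> cHom ?AP x x'" "a \<in> fst (lperp D T to tm A \<sigma>) x'"
    then show "snd (lperp D T to tm A \<sigma>) x x' u a \<in> fst (lperp D T to tm A \<sigma>) x"
      using lperp_act[of A \<sigma>, OF clos] by blast
  qed
  define h where "h = (\<lambda>(y::'p\<times>'c) (t::('p\<times>'c)\<times>'d\<times>(('c\<times>'p) \<Rightarrow> _ \<Rightarrow> 'd)).
     (\<lambda>w. if w \<in> cOb ?BM then (\<lambda>a. if a \<in> fst \<sigma> (cminus T c w) then cCmp D (fst (snd t)) ((snd (snd t)) (cminus T c w) a) else undefined) else undefined))"
  have hsimp: "\<And>y x f \<zeta>. h y (x,f,\<zeta>) = (\<lambda>w. if w \<in> cOb ?BM then (\<lambda>a. if a \<in> fst \<sigma> (cminus T c w) then cCmp D f (\<zeta> (cminus T c w) a) else undefined) else undefined)"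
    by (simp add: h_def del: cminus_simp)
  have zeta: "\<And>x \<zeta> w a. \<zeta> \<in> fst (lperp D T to tm A \<sigma>) x \<Longrightarrow> w \<in> cOb ?BM \<Longrightarrow> a \<in> fst \<sigma> (cminus T c w) \<Longrightarrow>
      \<zeta> (cminus T c w) a \<in> cHom D (fst x) (snd w) \<and> tm (\<zeta> (cminus T c w) a) = cCmp T (snd x) (cCmp T c (fst w))"
  proof -
    fix x \<zeta> w a assume \<zeta>: "\<zeta> \<in> fst (lperp D T to tm A \<sigma>) x" and w: "w \<in> cOb ?BM" and a: "a \<in> fst \<sigma> (cminus T c w)"
    have "nat_trans ?AM \<sigma> (DerR D T tm x) \<zeta>" using \<zeta> by (simp add: lperp_fst)
    from nt_val[OF this cminus_ob[OF c w] a] show "?thesis x \<zeta> w a" by simp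
  qed
  have "nat_trans ?BP (lan ?AP ?BP (cplus T c) id (lperp D T to tm A \<sigma>)) (lperp D T to tm B (pull (cminus T c) id \<sigma>))
         (lan_ext ?AP ?BP (cplus T c) id (lperp D T to tm A \<sigma>) h)"
  proof (rule L.ext_nat)
    fix y x x' u f \<zeta> assume y: "y \<in> cOb ?BP" and u: "u \<in> cHom ?AP x x'" and f: "f \<in> cHom ?BP y (cplus T c x)"
      and \<zeta>: "\<zeta> \<in> fst (lperp D T to tm A \<sigma>) x'"
    have uD: "u \<in> cHom D (fst x) (fst x')" using u by (simp add: Bp_hom)
    have fD: "f \<in> cHom D (fst y) (fst x)" using f by (simp add: Bp_hom)
    show "h y (x, f, snd (lperp D T to tm A \<sigma>) x x' u \<zeta>) = h y (x', cCmp ?BP f (id u), \<zeta>)"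
      unfolding hsimp
    proof (rule ifext)
      fix w a assume w: "w \<in> cOb ?BM" and a: "a \<in> fst \<sigma> (cminus T c w)"
      have al: "\<zeta> (cminus T c w) a \<in> cHom D (fst x') (snd w)" using zeta[OF \<zeta> w a] by blast
      have "snd (lperp D T to tm A \<sigma>) x x' u \<zeta> (cminus T c w) a = cCmp D (cCmp D u (\<zeta> (cminus T c w) a)) (cId D (snd w))"
        using cminus_ob[OF c w] a unfolding lperp_snd by (simp del: cminus_simp) simp
      then show "cCmp D f (snd (lperp D T to tm A \<sigma>) x x' u \<zeta> (cminus T c w) a) = cCmp D (cCmp ?BP f (id u)) (\<zeta> (cminus T c w) a)"
        using Didr[OF Dcmp[OF uD al]] Dassoc[OF fD uD al] by simp
    qed
  next
    fix y t assume y: "y \<in> cOb ?BP" and t: "t \<in> L.car y"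
    obtain x f \<zeta> where t': "t = (x,f,\<zeta>)" by (cases t) auto
    have x: "x \<in> cOb ?AP" and f: "f \<in> cHom ?BP y (cplus T c x)" and \<zeta>: "\<zeta> \<in> fst (lperp D T to tm A \<sigma>) x"
      using t t' by (auto simp: L.car_iff simp del: cplus_simp)
    have fD: "f \<in> cHom D (fst y) (fst x)" and ff: "snd y = cCmp T (tm f) (cCmp T (snd x) c)" using f by (auto simp: Bp_hom)
    have sx: "snd x \<in> cHom T (to (fst x)) A" using x by (simp add: Bp_ob)
    have nt: "nat_trans ?AM \<sigma> (DerR D T tm x) \<zeta>" using \<zeta> by (simp add: lperp_fst)
    show "h y t \<in> fst (lperp D T to tm B (pull (cminus T c) id \<sigma>)) y"
      unfolding t' hsimp lperp_fst mem_Collect_eq nat_trans_def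
    proof (intro conjI allI ballI impI)
      fix w assume "w \<notin> cOb ?BM" then show "(\<lambda>w. if w \<in> cOb ?BM then (\<lambda>a. if a \<in> fst \<sigma> (cminus T c w) then cCmp D f (\<zeta> (cminus T c w) a) else undefined) else undefined) w = undefined" by simp
    next
      fix w a assume w: "w \<in> cOb ?BM" and a: "a \<in> fst (pull (cminus T c) id \<sigma>) w"
      then have a': "a \<in> fst \<sigma> (cminus T c w)" by (simp del: cminus_simp)
      have al: "\<zeta> (cminus T c w) a \<in> cHom D (fst x) (snd w)" "tm (\<zeta> (cminus T c w) a) = cCmp T (snd x) (cCmp T c (fst w))"
        using zeta[OF \<zeta> w a'] by blast+
      have fw: "fst w \<in> cHom T B (to (snd w))" using w by (simp add: Bm_ob)
      have tf: "tm f \<in> cHom T (to (fst y)) (to (fst x))" using tm_hom[OF fD] .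
      have "tm (cCmp D f (\<zeta> (cminus T c w) a)) = cCmp T (tm f) (cCmp T (snd x) (cCmp T c (fst w)))"
        using tm_cmp[OF fD al(1)] al(2) by simp
      also have "\<dots> = cCmp T (cCmp T (tm f) (cCmp T (snd x) c)) (fst w)"
        using Tassoc[OF tf Tcmp[OF sx c] fw] Tassoc[OF sx c fw] by simp
      finally have "tm (cCmp D f (\<zeta> (cminus T c w) a)) = cCmp T (snd y) (fst w)" using ff by simp
      then show "(\<lambda>w. if w \<in> cOb ?BM then (\<lambda>a. if a \<in> fst \<sigma> (cminus T c w) then cCmp D f (\<zeta> (cminus T c w) a) else undefined) else undefined) w a \<in> fst (DerR D T tm y) w"
        using w a' Dcmp[OF fD al(1)] by (simp del: cminus_simp)
    next
      fix w a assume "w \<in> cOb ?BM" "a \<notin> fst (pull (cminus T c) id \<sigma>) w"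
      then show "(\<lambda>w. if w \<in> cOb ?BM then (\<lambda>a. if a \<in> fst \<sigma> (cminus T c w) then cCmp D f (\<zeta> (cminus T c w) a) else undefined) else undefined) w a = undefined"
        by (simp del: cminus_simp)
    next
      fix w1 w2 v a assume v: "v \<in> cHom ?BM w1 w2" and a: "a \<in> fst (pull (cminus T c) id \<sigma>) w2"
      have w1: "w1 \<in> cOb ?BM" and w2: "w2 \<in> cOb ?BM" using v by (auto simp: Bm_hom)
      have a': "a \<in> fst \<sigma> (cminus T c w2)" using a by (simp del: cminus_simp)
      have vA: "v \<in> cHom ?AM (cminus T c w1) (cminus T c w2)" using cminus_hom[OF c v] .
      have va: "snd \<sigma> (cminus T c w1) (cminus T c w2) v a \<in> fst \<sigma> (cminus T c w1)" using clos[OF vA a'] .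
      have vD: "v \<in> cHom D (snd w2) (snd w1)" using v by (simp add: Bm_hom)
      have al: "\<zeta> (cminus T c w2) a \<in> cHom D (fst x) (snd w2)" using zeta[OF \<zeta> w2 a'] by blast
      have n: "\<zeta> (cminus T c w1) (snd \<sigma> (cminus T c w1) (cminus T c w2) v a) = cCmp D (\<zeta> (cminus T c w2) a) v"
        using nt_nat[OF nt vA a'] Didl[OF al] by (simp del: cminus_simp)
      show "(\<lambda>w. if w \<in> cOb ?BM then (\<lambda>a. if a \<in> fst \<sigma> (cminus T c w) then cCmp D f (\<zeta> (cminus T c w) a) else undefined) else undefined) w1 (snd (pull (cminus T c) id \<sigma>) w1 w2 v a) =
         snd (DerR D T tm y) w1 w2 v ((\<lambda>w. if w \<in> cOb ?BM then (\<lambda>a. if a \<in> fst \<sigma> (cminus T c w) then cCmp D f (\<zeta> (cminus T c w) a) else undefined) else undefined) w2 a)"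
        using w1 w2 va a' n Dassoc[OF fD al vD] Didl[OF Dcmp[OF fD al]] by (simp del: cminus_simp)
    qed
  next
    fix y1 y2 g x f \<zeta> assume g: "g \<in> cHom ?BP y1 y2" and t: "(x, f, \<zeta>) \<in> L.car y2"
    have f: "f \<in> cHom ?BP y2 (cplus T c x)" and \<zeta>: "\<zeta> \<in> fst (lperp D T to tm A \<sigma>) x"
      using t by (auto simp: L.car_iff simp del: cplus_simp)
    have fD: "f \<in> cHom D (fst y2) (fst x)" using f by (simp add: Bp_hom)
    have gD: "g \<in> cHom D (fst y1) (fst y2)" using g by (simp add: Bp_hom)
    show "h y1 (x, cCmp ?BP g f, \<zeta>) = snd (lperp D T to tm B (pull (cminus T c) id \<sigma>)) y1 y2 g (h y2 (x, f, \<zeta>))"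
      unfolding hsimp lperp_snd pull_fst
    proof (rule ifext)
      fix w a assume w: "w \<in> cOb ?BM" and a: "a \<in> fst \<sigma> (cminus T c w)"
      have al: "\<zeta> (cminus T c w) a \<in> cHom D (fst x) (snd w)" using zeta[OF \<zeta> w a] by blast
      show "cCmp D (cCmp ?BP g f) (\<zeta> (cminus T c w) a) =
        cCmp D (cCmp D g ((\<lambda>w. if w \<in> cOb ?BM then \<lambda>a. if a \<in> fst \<sigma> (cminus T c w) then cCmp D f (\<zeta> (cminus T c w) a) else undefined else undefined) w a)) (cId D (snd w))"
        using w a Dassoc[OF gD fD al] Didr[OF Dcmp[OF gD Dcmp[OF fD al]]] by (simp del: cminus_simp)
    qed
  qed
  then show ?thesis by blast
qed

end



context RS begin
declare if_cong[cong]

lemma snd_cminus[simp]: "snd (cminus T c x) = snd x" by simp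
lemma fst_cplus[simp]: "fst (cplus T c x) = fst x" by simp
lemma fst_cminus[simp]: "fst (cminus T c x) = cCmp T c (fst x)" by simp
lemma snd_cplus[simp]: "snd (cplus T c x) = cCmp T (snd x) c" by simp

lemma part_a:
  fixes \<psi> :: "('c \<times> 'p, 'd, 'v) psh"
  assumes c: "c \<in> cHom T A B" and \<psi>: "presheaf (Bminus D T to tm B) \<psi>"
  shows "psh_iso (Bplus D T to tm A)
           (pull (cplus T c) id (lperp D T to tm B \<psi>))
           (lperp D T to tm A (lan (Bminus D T to tm B) (Bminus D T to tm A) (cminus T c) id \<psi>))"
proof -
  let ?BM = "Bminus D T to tm B" and ?AM = "Bminus D T to tm A"
  let ?AP = "Bplus D T to tm A" and ?BP = "Bplus D T to tm B"
  let ?F = "pull (cplus T c) id (lperp D T to tm B \<psi>)"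
  let ?L = "lan ?BM ?AM (cminus T c) id \<psi>"
  let ?G = "lperp D T to tm A ?L"
  have clos: "\<And>y1 y2 g a. g \<in> cHom ?BM y1 y2 \<Longrightarrow> a \<in> fst \<psi> y2 \<Longrightarrow> snd \<psi> y1 y2 g a \<in> fst \<psi> y1"
    using psh_act[OF \<psi>] by blast
  interpret L: lanctx ?BM ?AM "cminus T c" id \<psi>
  proof
    show "category ?BM" "category ?AM" by (rule cat_Bm)+
  next
    fix x assume "x \<in> cOb ?BM" then show "cminus T c x \<in> cOb ?AM" using cminus_ob[OF c] by blast
  next
    fix u x x' assume "u \<in> cHom ?BM x x'" then show "id u \<in> cHom ?AM (cminus T c x) (cminus T c x')"
      using cminus_hom[OF c] by simp
  next
    fix u x x' a assume "u \<in> cHom ?BM x x'" "a \<in> fst \<psi> x'"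
    then show "snd \<psi> x x' u a \<in> fst \<psi> x" by (rule clos)
  qed
  define hA where "hA = (\<lambda>(\<theta>::('c\<times>'p) \<Rightarrow> 'v \<Rightarrow> 'd) (y::'c\<times>'p) (t::('c\<times>'p)\<times>'d\<times>'v). cCmp D (\<theta> (fst t) (snd (snd t))) (fst (snd t)))"
  have hAs: "\<And>\<theta> y x f a. hA \<theta> y (x,f,a) = cCmp D (\<theta> x a) f" by (simp add: hA_def)
  define \<Phi> where "\<Phi> = (\<lambda>\<theta>. lan_ext ?BM ?AM (cminus T c) id \<psi> (hA \<theta>))"
  have Fx: "\<And>x \<theta>. \<theta> \<in> fst ?F x \<longleftrightarrow> nat_trans ?BM \<psi> (DerR D T tm (cplus T c x)) \<theta>"
    by (simp add: lperp_fst del: cplus_simp)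
  have Gx: "\<And>x \<eta>. \<eta> \<in> fst ?G x \<longleftrightarrow> nat_trans ?AM ?L (DerR D T tm x) \<eta>"
    by (simp add: lperp_fst)
  have thv: "\<And>x \<theta> x' a. x \<in> cOb ?AP \<Longrightarrow> \<theta> \<in> fst ?F x \<Longrightarrow> x' \<in> cOb ?BM \<Longrightarrow> a \<in> fst \<psi> x' \<Longrightarrow>
      \<theta> x' a \<in> cHom D (fst x) (snd x') \<and> tm (\<theta> x' a) = cCmp T (cCmp T (snd x) c) (fst x')"
  proof -
    fix x \<theta> x' a assume "\<theta> \<in> fst ?F x" "x' \<in> cOb ?BM" "a \<in> fst \<psi> x'"
    then show "\<theta> x' a \<in> cHom D (fst x) (snd x') \<and> tm (\<theta> x' a) = cCmp T (cCmp T (snd x) c) (fst x')"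
      using nt_val[of ?BM \<psi> "DerR D T tm (cplus T c x)" \<theta>] Fx by simp
  qed
  have thn: "\<And>x \<theta> x1 x2 u a. x \<in> cOb ?AP \<Longrightarrow> \<theta> \<in> fst ?F x \<Longrightarrow> u \<in> cHom ?BM x1 x2 \<Longrightarrow> a \<in> fst \<psi> x2 \<Longrightarrow>
      \<theta> x1 (snd \<psi> x1 x2 u a) = cCmp D (\<theta> x2 a) u"
  proof -
    fix x \<theta> x1 x2 u a assume x: "x \<in> cOb ?AP" and th: "\<theta> \<in> fst ?F x" and u: "u \<in> cHom ?BM x1 x2" and a: "a \<in> fst \<psi> x2"
    have x2: "x2 \<in> cOb ?BM" using u by (simp add: Bm_hom)
    have "\<theta> x1 (snd \<psi> x1 x2 u a) = cCmp D (cCmp D (cId D (fst x)) (\<theta> x2 a)) u"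
      using nt_nat[of ?BM \<psi> "DerR D T tm (cplus T c x)" \<theta>, OF _ u a] Fx th by simp
    then show "\<theta> x1 (snd \<psi> x1 x2 u a) = cCmp D (\<theta> x2 a) u" using Didl[OF conjunct1[OF thv[OF x th x2 a]]] by simp
  qed
  have resp: "\<And>x \<theta> y x1 x2 u f a. x \<in> cOb ?AP \<Longrightarrow> \<theta> \<in> fst ?F x \<Longrightarrow> u \<in> cHom ?BM x1 x2 \<Longrightarrow>
       f \<in> cHom ?AM y (cminus T c x1) \<Longrightarrow> a \<in> fst \<psi> x2 \<Longrightarrow>
       hA \<theta> y (x1, f, snd \<psi> x1 x2 u a) = hA \<theta> y (x2, cCmp ?AM f (id u), a)"
  proof -
    fix x \<theta> y x1 x2 u f a assume x: "x \<in> cOb ?AP" and th: "\<theta> \<in> fst ?F x" and u: "u \<in> cHom ?BM x1 x2"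
      and f: "f \<in> cHom ?AM y (cminus T c x1)" and a: "a \<in> fst \<psi> x2"
    have x2: "x2 \<in> cOb ?BM" using u by (simp add: Bm_hom)
    have uD: "u \<in> cHom D (snd x2) (snd x1)" using u by (simp add: Bm_hom)
    have fD: "f \<in> cHom D (snd x1) (snd y)" using f by (simp add: Bm_hom)
    show "hA \<theta> y (x1, f, snd \<psi> x1 x2 u a) = hA \<theta> y (x2, cCmp ?AM f (id u), a)"
      using thn[OF x th u a] Dassoc[OF conjunct1[OF thv[OF x th x2 a]] uD fD] by (simp add: hAs)
  qed
  have PhiG: "\<And>x \<theta>. x \<in> cOb ?AP \<Longrightarrow> \<theta> \<in> fst ?F x \<Longrightarrow> \<Phi> \<theta> \<in> fst ?G x"
  proof -
    fix x \<theta> assume x: "x \<in> cOb ?AP" and th: "\<theta> \<in> fst ?F x"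
    have sx: "snd x \<in> cHom T (to (fst x)) A" using x by (simp add: Bp_ob)
    have "nat_trans ?AM ?L (DerR D T tm x) (\<Phi> \<theta>)" unfolding \<Phi>_def
    proof (rule L.ext_nat)
      fix y x1 x2 u f a assume "y \<in> cOb ?AM" "u \<in> cHom ?BM x1 x2" "f \<in> cHom ?AM y (cminus T c x1)" "a \<in> fst \<psi> x2"
      then show "hA \<theta> y (x1, f, snd \<psi> x1 x2 u a) = hA \<theta> y (x2, cCmp ?AM f (id u), a)" using resp[OF x th] by blast
    next
      fix y t assume y: "y \<in> cOb ?AM" and t: "t \<in> L.car y"
      obtain x' f a where t': "t = (x',f,a)" by (cases t) auto
      have x': "x' \<in> cOb ?BM" and f: "f \<in> cHom ?AM y (cminus T c x')" and a: "a \<in> fst \<psi> x'"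
        using t t' by (auto simp: L.car_iff simp del: cminus_simp)
      have fD: "f \<in> cHom D (snd x') (snd y)" and ff: "cCmp T (cCmp T c (fst x')) (tm f) = fst y" using f by (auto simp: Bm_hom)
      have fx: "fst x' \<in> cHom T B (to (snd x'))" using x' by (simp add: Bm_ob)
      have al: "\<theta> x' a \<in> cHom D (fst x) (snd x')" "tm (\<theta> x' a) = cCmp T (cCmp T (snd x) c) (fst x')"
        using thv[OF x th x' a] by blast+
      have "tm (cCmp D (\<theta> x' a) f) = cCmp T (cCmp T (cCmp T (snd x) c) (fst x')) (tm f)"
        using tm_cmp[OF al(1) fD] al(2) by simp
      also have "\<dots> = cCmp T (snd x) (cCmp T (cCmp T c (fst x')) (tm f))"
        using Tassoc[OF Tcmp[OF sx c] fx tm_hom[OF fD]] Tassoc[OF sx c fx] Tassoc[OF sx Tcmp[OF c fx] tm_hom[OF fD]]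
          Tassoc[OF c fx tm_hom[OF fD]] by simp
      finally show "hA \<theta> y t \<in> fst (DerR D T tm x) y" using ff t' Dcmp[OF al(1) fD] by (simp add: hAs)
    next
      fix y1 y2 g x' f a assume g: "g \<in> cHom ?AM y1 y2" and t: "(x', f, a) \<in> L.car y2"
      have x': "x' \<in> cOb ?BM" and f: "f \<in> cHom ?AM y2 (cminus T c x')" and a: "a \<in> fst \<psi> x'"
        using t by (auto simp: L.car_iff simp del: cminus_simp)
      have fD: "f \<in> cHom D (snd x') (snd y2)" using f by (simp add: Bm_hom)
      have gD: "g \<in> cHom D (snd y2) (snd y1)" using g by (simp add: Bm_hom)
      have al: "\<theta> x' a \<in> cHom D (fst x) (snd x')" using thv[OF x th x' a] by blast
      show "hA \<theta> y1 (x', cCmp ?AM g f, a) = snd (DerR D T tm x) y1 y2 g (hA \<theta> y2 (x', f, a))"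
        using Dassoc[OF al fD gD] Didl[OF Dcmp[OF al fD]] by (simp add: hAs)
    qed
    then show "\<Phi> \<theta> \<in> fst ?G x" using Gx by blast
  qed
  define \<Psi> where "\<Psi> = (\<lambda>x. if x \<in> cOb ?AP then (\<lambda>\<theta>. if \<theta> \<in> fst ?F x then \<Phi> \<theta> else undefined) else undefined)"
  have nat: "nat_trans ?AP ?F ?G \<Psi>"
    unfolding nat_trans_def
  proof (intro conjI allI ballI impI)
    fix x assume "x \<notin> cOb ?AP" then show "\<Psi> x = undefined" by (simp add: \<Psi>_def)
  next
    fix x \<theta> assume "x \<in> cOb ?AP" "\<theta> \<in> fst ?F x" then show "\<Psi> x \<theta> \<in> fst ?G x" using PhiG by (simp add: \<Psi>_def)
  next
    fix x \<theta> assume "x \<in> cOb ?AP" "\<theta> \<notin> fst ?F x" then show "\<Psi> x \<theta> = undefined" by (simp add: \<Psi>_def)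
  next
    fix x1 x2 k \<theta> assume k: "k \<in> cHom ?AP x1 x2" and th: "\<theta> \<in> fst ?F x2"
    have x1: "x1 \<in> cOb ?AP" and x2: "x2 \<in> cOb ?AP" using k by (auto simp: Bp_hom)
    have kD: "k \<in> cHom D (fst x1) (fst x2)" using k by (simp add: Bp_hom)
    have kB: "k \<in> cHom ?BP (cplus T c x1) (cplus T c x2)" using cplus_hom[OF c k] .
    let ?th' = "snd ?F x1 x2 k \<theta>"
    have th'1: "?th' = snd (lperp D T to tm B \<psi>) (cplus T c x1) (cplus T c x2) k \<theta>" by simp
    have th': "?th' \<in> fst ?F x1"
      using lperp_act[of B \<psi>, OF clos kB] th by (simp del: cplus_simp)
    have th'v: "\<And>x' a. x' \<in> cOb ?BM \<Longrightarrow> a \<in> fst \<psi> x' \<Longrightarrow> ?th' x' a = cCmp D k (\<theta> x' a)"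
    proof -
      fix x' a assume x': "x' \<in> cOb ?BM" and a: "a \<in> fst \<psi> x'"
      have al: "\<theta> x' a \<in> cHom D (fst x2) (snd x')" using thv[OF x2 th x' a] by blast
      show "?th' x' a = cCmp D k (\<theta> x' a)"
        unfolding th'1 lperp_snd using x' a Didr[OF Dcmp[OF kD al]] by simp
    qed
    show "\<Psi> x1 (snd ?F x1 x2 k \<theta>) = snd ?G x1 x2 k (\<Psi> x2 \<theta>)"
    proof -
      have "\<Psi> x1 ?th' = \<Phi> ?th'" using x1 th' by (simp add: \<Psi>_def)
      also have "\<dots> = snd ?G x1 x2 k (\<Phi> \<theta>)"
        unfolding \<Phi>_def lperp_snd lan_ext_def
      proof (rule ifext)
        fix y S assume y: "y \<in> cOb ?AM" and S: "S \<in> fst ?L y"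
        obtain x' f a where t: "(SOME t. t \<in> S) = (x',f,a)" by (cases "SOME t. t \<in> S") auto
        have "(x',f,a) \<in> L.car y" using L.some_car[OF S] t by simp
        then have x': "x' \<in> cOb ?BM" and f: "f \<in> cHom ?AM y (cminus T c x')" and a: "a \<in> fst \<psi> x'"
          by (auto simp: L.car_iff simp del: cminus_simp)
        have fD: "f \<in> cHom D (snd x') (snd y)" using f by (simp add: Bm_hom)
        have al: "\<theta> x' a \<in> cHom D (fst x2) (snd x')" using thv[OF x2 th x' a] by blast
        show "hA ?th' y (SOME t. t \<in> S) = cCmp D (cCmp D k ((if y \<in> cOb ?AM then (\<lambda>S. if S \<in> fst ?L y then hA \<theta> y (SOME t. t \<in> S) else undefined) else undefined) S)) (cId D (snd y))"
          using y S t th'v[OF x' a] Dassoc[OF kD al fD] Didr[OF Dcmp[OF kD Dcmp[OF al fD]]] by (simp add: hAs)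
      qed
      also have "\<dots> = snd ?G x1 x2 k (\<Psi> x2 \<theta>)" using x2 th by (simp add: \<Psi>_def)
      finally show ?thesis .
    qed
  qed
  define \<Gamma> where "\<Gamma> = (\<lambda>(\<eta>::('c\<times>'p) \<Rightarrow> (('c\<times>'p)\<times>'d\<times>'v) set \<Rightarrow> 'd). (\<lambda>x'. if x' \<in> cOb ?BM then (\<lambda>a. if a \<in> fst \<psi> x' then
      \<eta> (cminus T c x') (L.eqr (cminus T c x') `` {(x', cId D (snd x'), a)}) else undefined) else undefined))"
  have idcar: "\<And>x' a. x' \<in> cOb ?BM \<Longrightarrow> a \<in> fst \<psi> x' \<Longrightarrow> (x', cId D (snd x'), a) \<in> L.car (cminus T c x')"
  proof -
    fix x' a assume x': "x' \<in> cOb ?BM" and a: "a \<in> fst \<psi> x'"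
    have "cId ?AM (cminus T c x') \<in> cHom ?AM (cminus T c x') (cminus T c x')"
      using cat_id[OF cat_Bm cminus_ob[OF c x']] .
    then show "(x', cId D (snd x'), a) \<in> L.car (cminus T c x')" using x' a by (simp add: L.car_iff del: cminus_simp)
  qed
  have bij: "\<And>x. x \<in> cOb ?AP \<Longrightarrow> bij_betw (\<Psi> x) (fst ?F x) (fst ?G x)"
  proof -
    fix x assume x: "x \<in> cOb ?AP"
    have sx: "snd x \<in> cHom T (to (fst x)) A" using x by (simp add: Bp_ob)
    have GF: "\<And>\<eta>. \<eta> \<in> fst ?G x \<Longrightarrow> \<Gamma> \<eta> \<in> fst ?F x"
    proof -
      fix \<eta> assume eta: "\<eta> \<in> fst ?G x"
      have nt: "nat_trans ?AM ?L (DerR D T tm x) \<eta>" using eta Gx by blast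
      have ev: "\<And>x' a. x' \<in> cOb ?BM \<Longrightarrow> a \<in> fst \<psi> x' \<Longrightarrow> \<Gamma> \<eta> x' a \<in> cHom D (fst x) (snd x') \<and>
          tm (\<Gamma> \<eta> x' a) = cCmp T (cCmp T (snd x) c) (fst x')"
      proof -
        fix x' a assume x': "x' \<in> cOb ?BM" and a: "a \<in> fst \<psi> x'"
        have fx: "fst x' \<in> cHom T B (to (snd x'))" using x' by (simp add: Bm_ob)
        have "\<eta> (cminus T c x') (L.eqr (cminus T c x') `` {(x', cId D (snd x'), a)}) \<in> fst (DerR D T tm x) (cminus T c x')"
          using nt_val[OF nt cminus_ob[OF c x'] L.class_in[OF idcar[OF x' a]]] .
        then show "?thesis x' a" using x' a Tassoc[OF sx c fx] by (simp add: \<Gamma>_def del: cminus_simp)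
      qed
      show "\<Gamma> \<eta> \<in> fst ?F x" unfolding Fx nat_trans_def
      proof (intro conjI allI ballI impI)
        fix x' assume "x' \<notin> cOb ?BM" then show "\<Gamma> \<eta> x' = undefined" by (simp add: \<Gamma>_def)
      next
        fix x' a assume "x' \<in> cOb ?BM" "a \<in> fst \<psi> x'"
        then show "\<Gamma> \<eta> x' a \<in> fst (DerR D T tm (cplus T c x)) x'" using ev by simp
      next
        fix x' a assume "x' \<in> cOb ?BM" "a \<notin> fst \<psi> x'" then show "\<Gamma> \<eta> x' a = undefined" by (simp add: \<Gamma>_def)
      next
        fix x1 x2 u a assume u: "u \<in> cHom ?BM x1 x2" and a: "a \<in> fst \<psi> x2"
        have x1: "x1 \<in> cOb ?BM" and x2: "x2 \<in> cOb ?BM" using u by (auto simp: Bm_hom)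
        have uD: "u \<in> cHom D (snd x2) (snd x1)" using u by (simp add: Bm_hom)
        have ua: "snd \<psi> x1 x2 u a \<in> fst \<psi> x1" using clos[OF u a] .
        have uA: "u \<in> cHom ?AM (cminus T c x1) (cminus T c x2)" using cminus_hom[OF c u] .
        have r: "((x1, cId D (snd x1), snd \<psi> x1 x2 u a), (x2, cCmp ?AM (cId D (snd x1)) (id u), a)) \<in> L.rel (cminus T c x1)"
        proof -
          have "cId ?AM (cminus T c x1) \<in> cHom ?AM (cminus T c x1) (cminus T c x1)"
            using cat_id[OF cat_Bm cminus_ob[OF c x1]] .
          then have "cId D (snd x1) \<in> cHom ?AM (cminus T c x1) (cminus T c x1)" by (simp del: cminus_simp)
          then show ?thesis unfolding lan_rel_def using u a by blast
        qed
        have cu: "cCmp ?AM (cId D (snd x1)) (id u) = u" using Didr[OF uD] by simp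
        have cls: "L.eqr (cminus T c x1) `` {(x1, cId D (snd x1), snd \<psi> x1 x2 u a)} =
            snd ?L (cminus T c x1) (cminus T c x2) u (L.eqr (cminus T c x2) `` {(x2, cId D (snd x2), a)})"
          using L.rel_class[OF r] cu L.act_class[OF uA idcar[OF x2 a]] Didl[OF uD] by simp
        have "\<Gamma> \<eta> x1 (snd \<psi> x1 x2 u a) = \<eta> (cminus T c x1) (L.eqr (cminus T c x1) `` {(x1, cId D (snd x1), snd \<psi> x1 x2 u a)})"
          using x1 ua by (simp add: \<Gamma>_def del: cminus_simp)
        also have "\<dots> = snd (DerR D T tm x) (cminus T c x1) (cminus T c x2) u (\<eta> (cminus T c x2) (L.eqr (cminus T c x2) `` {(x2, cId D (snd x2), a)}))"
          using cls nt_nat[OF nt uA L.class_in[OF idcar[OF x2 a]]] by simp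
        also have "\<dots> = snd (DerR D T tm (cplus T c x)) x1 x2 u (\<Gamma> \<eta> x2 a)"
          using x2 a by (simp add: \<Gamma>_def del: cminus_simp)
        finally show "\<Gamma> \<eta> x1 (snd \<psi> x1 x2 u a) = snd (DerR D T tm (cplus T c x)) x1 x2 u (\<Gamma> \<eta> x2 a)" .
      qed
    qed
    have inv1: "\<And>\<theta>. \<theta> \<in> fst ?F x \<Longrightarrow> \<Gamma> (\<Psi> x \<theta>) = \<theta>"
    proof -
      fix \<theta> assume th: "\<theta> \<in> fst ?F x"
      have nt: "nat_trans ?BM \<psi> (DerR D T tm (cplus T c x)) \<theta>" using th Fx by blast
      show "\<Gamma> (\<Psi> x \<theta>) = \<theta>"
      proof (rule ext)+
        fix x' a
        show "\<Gamma> (\<Psi> x \<theta>) x' a = \<theta> x' a"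
        proof (cases "x' \<in> cOb ?BM \<and> a \<in> fst \<psi> x'")
          case True
          then have x': "x' \<in> cOb ?BM" and a: "a \<in> fst \<psi> x'" by auto
          have al: "\<theta> x' a \<in> cHom D (fst x) (snd x')" using thv[OF x th x' a] by blast
          have "\<Phi> \<theta> (cminus T c x') (L.eqr (cminus T c x') `` {(x', cId D (snd x'), a)}) = hA \<theta> (cminus T c x') (x', cId D (snd x'), a)"
            unfolding \<Phi>_def by (rule L.ext_class[OF cminus_ob[OF c x'] idcar[OF x' a]]) (rule resp[OF x th])
          then show ?thesis using x' a x th Didr[OF al] by (simp add: \<Gamma>_def \<Psi>_def hAs del: cminus_simp)
        next
          case False
          then show ?thesis using nt_out[OF nt] nt_und[OF nt] by (auto simp: \<Gamma>_def)
        qed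
      qed
    qed
    have inv2: "\<And>\<eta>. \<eta> \<in> fst ?G x \<Longrightarrow> \<Psi> x (\<Gamma> \<eta>) = \<eta>"
    proof -
      fix \<eta> assume eta: "\<eta> \<in> fst ?G x"
      have nt: "nat_trans ?AM ?L (DerR D T tm x) \<eta>" using eta Gx by blast
      have th: "\<Gamma> \<eta> \<in> fst ?F x" using GF[OF eta] .
      show "\<Psi> x (\<Gamma> \<eta>) = \<eta>"
      proof (rule ext)+
        fix y S
        show "\<Psi> x (\<Gamma> \<eta>) y S = \<eta> y S"
        proof (cases "y \<in> cOb ?AM \<and> S \<in> fst ?L y")
          case True
          then have y: "y \<in> cOb ?AM" and S: "S \<in> fst ?L y" by auto
          obtain t where t: "t \<in> L.car y" "S = L.eqr y `` {t}" using L.quot_iff S by blast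
          obtain x' f a where t': "t = (x',f,a)" by (cases t) auto
          have x': "x' \<in> cOb ?BM" and f: "f \<in> cHom ?AM y (cminus T c x')" and a: "a \<in> fst \<psi> x'"
            using t t' by (auto simp: L.car_iff simp del: cminus_simp)
          have fD: "f \<in> cHom D (snd x') (snd y)" using f by (simp add: Bm_hom)
          have e1: "\<Phi> (\<Gamma> \<eta>) y S = hA (\<Gamma> \<eta>) y t"
            unfolding \<Phi>_def t(2) by (rule L.ext_class[OF y t(1)]) (rule resp[OF x th])
          have cf: "cCmp ?AM f (cId D (snd x')) = f" using Didl[OF fD] by simp
          have e2: "S = snd ?L y (cminus T c x') f (L.eqr (cminus T c x') `` {(x', cId D (snd x'), a)})"
            using L.act_class[OF f idcar[OF x' a]] cf t t' by simp
          have "\<eta> y S = cCmp D (cCmp D (cId D (fst x)) (\<eta> (cminus T c x') (L.eqr (cminus T c x') `` {(x', cId D (snd x'), a)}))) f"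
            using e2 nt_nat[OF nt f L.class_in[OF idcar[OF x' a]]] by simp
          moreover have "\<eta> (cminus T c x') (L.eqr (cminus T c x') `` {(x', cId D (snd x'), a)}) \<in> cHom D (fst x) (snd x')"
            using nt_val[OF nt cminus_ob[OF c x'] L.class_in[OF idcar[OF x' a]]] by simp
          ultimately have "\<eta> y S = cCmp D (\<eta> (cminus T c x') (L.eqr (cminus T c x') `` {(x', cId D (snd x'), a)})) f"
            using Didl by simp
          then show ?thesis using e1 x th x' a t' by (simp add: \<Psi>_def \<Gamma>_def hAs del: cminus_simp)
        next
          case False
          then show ?thesis using nt_out[OF nt] nt_und[OF nt] x th
            by (auto simp: \<Psi>_def \<Phi>_def lan_ext_def)
        qed
      qed
    qed
    show "bij_betw (\<Psi> x) (fst ?F x) (fst ?G x)"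
    proof (rule bij_betw_byWitness[where f'=\<Gamma>])
      show "\<forall>a\<in>fst ?F x. \<Gamma> (\<Psi> x a) = a" using inv1 by blast
      show "\<forall>a'\<in>fst ?G x. \<Psi> x (\<Gamma> a') = a'" using inv2 by blast
      show "\<Psi> x ` fst ?F x \<subseteq> fst ?G x" using PhiG[OF x] x unfolding \<Psi>_def by (auto simp del: cplus_simp)
      show "\<Gamma> ` fst ?G x \<subseteq> fst ?F x" using GF by blast
    qed
  qed
  show ?thesis unfolding psh_iso_def using nat bij by blast
qed

end


theorem corollary4p12:
  fixes D :: "('p,'d) cat" and T :: "('a,'c) cat"
    and to :: "'p \<Rightarrow> 'a" and tm :: "'d \<Rightarrow> 'c"
    and A B :: 'a and c :: 'c
    and \<psi> :: "('c \<times> 'p, 'd, 'v) psh"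
    and \<rho> :: "('p \<times> 'c, 'd, 'w) psh"
    and \<sigma> :: "('c \<times> 'p, 'd, 'u) psh"
  assumes "refinement_system D T to tm"
    and "c \<in> cHom T A B"
    and "presheaf (Bminus D T to tm B) \<psi>"
    and "presheaf (Bplus D T to tm B) \<rho>"
    and "presheaf (Bminus D T to tm A) \<sigma>"
  shows "psh_iso (Bplus D T to tm A)
           (pull (cplus T c) id (lperp D T to tm B \<psi>))
           (lperp D T to tm A (lan (Bminus D T to tm B) (Bminus D T to tm A) (cminus T c) id \<psi>))
    \<and> (\<exists>\<eta>. nat_trans (Bminus D T to tm A)
           (lan (Bminus D T to tm B) (Bminus D T to tm A) (cminus T c) id (perp D T to tm B \<rho>))
           (perp D T to tm A (pull (cplus T c) id \<rho>)) \<eta>)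
    \<and> (\<exists>\<eta>. nat_trans (Bplus D T to tm B)
           (lan (Bplus D T to tm A) (Bplus D T to tm B) (cplus T c) id (lperp D T to tm A \<sigma>))
           (lperp D T to tm B (pull (cminus T c) id \<sigma>)) \<eta>)"
proof -
  interpret RS D T to tm by unfold_locales (rule assms(1))
  show ?thesis using part_a[OF assms(2,3)] part_b[OF assms(2,4)] part_c[OF assms(2,5)] by blast
qed

end
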